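(* Let $\xi$ be a bi-conformal vector field with gauge functions $\phi,\chi$. Then \[ \mathcal L_\xi E_a=-p\,\Pi_{aq}\phi^q,\qquad \mathcal L_\xi W_a=(p-n)\,P_{aq}\chi^q, \] \[ \mathcal L_\xi T_{abc}=(\phi\,\Pi_{ar}+\chi\,P_{ar})T^r{}_{bc}, \] and, setting $A_{abc}=P_a{}^dT_{dbc}$, $B_{abc}=\Pi_a{}^dT_{dbc}$, \[ \mathcal L_\xi A^a{}_{bc}=(\chi-\phi)A^a{}_{bc},\qquad \mathcal L_\xi B^a{}_{bc}=(\phi-\chi)B^a{}_{bc}. \]
   Context: Let $V$ be an $n$-dimensional smooth manifold with a $C^\infty$ pseudo-Riemannian metric $g_{ab}$ of arbitrary signature, Levi-Civita connection $\nabla$; indices are raised and lowered with $g$. Let $P_{ab}$, $\Pi_{ab}$ be smooth symmetric tensor fields forming at each point a pair of orthogonal complementary projectors: $P_{ab}+\Pi_{ab}=g_{ab}$, $P_{aq}P^q{}_b=P_{ab}$, $\Pi_{aq}\Pi^q{}_b=\Pi_{ab}$, $P_{aq}\Pi^q{}_b=0$; let $p=P^a{}_a$ (the constant rank of $P$), with $1\le p\le n-1$. Define $M_{abc}=\nabla_bP_{ac}+\nabla_cP_{ab}-\nabla_aP_{bc}$, $E_a=M_{acb}P^{cb}$, $W_a=-M_{acb}\Pi^{cb}$, and $T_{abc}=M_{abc}+\frac{1}{n-p}W_a\Pi_{bc}-\frac1pE_aP_{bc}$. A smooth vector field $\xi$ is a bi-conformal vector field (for the pair $P,\Pi$) if there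 exist smooth functions $\phi,\chi$ (its gauge functions) with $\mathcal L_\xi P_{ab}=\phi P_{ab}$ and $\mathcal L_\xi \Pi_{ab}=\chi\Pi_{ab}$. Notation: $\phi^a=g^{ab}\partial_b\phi$, $\chi^a=g^{ab}\partial_b\chi$. *)

theory Defs
  imports "HOL-Analysis.Analysis"
begin

text \<open>The manifold is represented by an open coordinate
  domain U in real^'n (n = CARD('n)); tensor fields are given by their component
  functions U -> real, indices range over the finite type 'n.\<close>

type_synonym 'n sfun = "real^'n \<Rightarrow> real"

definition pd :: "'n::finite sfun \<Rightarrow> 'n \<Rightarrow> 'n sfun" where
  "pd f i x = deriv (\<lambda>t. f (x + t *\<^sub>R axis i 1)) 0"

fun iter_pd :: "'n::finite list \<Rightarrow> 'n sfun \<Rightarrow> 'n sfun" where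
  "iter_pd [] f = f"
| "iter_pd (i # is) f = pd (iter_pd is f) i"

definition smooth_on :: "(real^'n::finite) set \<Rightarrow> 'n sfun \<Rightarrow> bool" where
  "smooth_on U f \<longleftrightarrow> (\<forall>is. \<forall>x\<in>U. iter_pd is f differentiable (at x))"

definition gmat :: "('n::finite \<Rightarrow> 'n \<Rightarrow> 'n sfun) \<Rightarrow> real^'n \<Rightarrow> real^'n^'n" where
  "gmat g x = (\<chi> i j. g i j x)"

definition metric_on :: "(real^'n::finite) set \<Rightarrow> ('n \<Rightarrow> 'n \<Rightarrow> 'n sfun) \<Rightarrow> bool" where
  "metric_on U g \<longleftrightarrow> open U \<and> (\<forall>i j. smooth_on U (g i j))
     \<and> (\<forall>x\<in>U. \<forall>i j. g i j x = g j i x) \<and> (\<forall>x\<in>U. det (gmat g x) \<noteq> 0)"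

definition ginv :: "('n::finite \<Rightarrow> 'n \<Rightarrow> 'n sfun) \<Rightarrow> 'n \<Rightarrow> 'n \<Rightarrow> 'n sfun" where
  "ginv g i j x = matrix_inv (gmat g x) $ i $ j"

definition christoffel :: "('n::finite \<Rightarrow> 'n \<Rightarrow> 'n sfun) \<Rightarrow> 'n \<Rightarrow> 'n \<Rightarrow> 'n \<Rightarrow> 'n sfun" where
  "christoffel g k i j x = (1/2) * (\<Sum>l\<in>UNIV. ginv g k l x *
      (pd (g j l) i x + pd (g i l) j x - pd (g i j) l x))"

text \<open>nabla2 g S b a c = nabla_b S_{ac} for a covariant 2-tensor S.\<close>
definition nabla2 :: "('n::finite \<Rightarrow> 'n \<Rightarrow> 'n sfun) \<Rightarrow> ('n \<Rightarrow> 'n \<Rightarrow> 'n sfun) \<Rightarrow> 'n \<Rightarrow> 'n \<Rightarrow> 'n \<Rightarrow> 'n sfun" where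
  "nabla2 g S b a c x = pd (S a c) b x
     - (\<Sum>k\<in>UNIV. christoffel g k b a x * S k c x)
     - (\<Sum>k\<in>UNIV. christoffel g k b c x * S a k x)"

definition up2 :: "('n::finite \<Rightarrow> 'n \<Rightarrow> 'n sfun) \<Rightarrow> ('n \<Rightarrow> 'n \<Rightarrow> 'n sfun) \<Rightarrow> 'n \<Rightarrow> 'n \<Rightarrow> 'n sfun" where
  "up2 g S a b x = (\<Sum>i\<in>UNIV. \<Sum>j\<in>UNIV. ginv g a i x * ginv g b j x * S i j x)"

definition trace2 :: "('n::finite \<Rightarrow> 'n \<Rightarrow> 'n sfun) \<Rightarrow> ('n \<Rightarrow> 'n \<Rightarrow> 'n sfun) \<Rightarrow> 'n sfun" where
  "trace2 g S x = (\<Sum>a\<in>UNIV. \<Sum>b\<in>UNIV. ginv g a b x * S a b x)"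

definition grad :: "('n::finite \<Rightarrow> 'n \<Rightarrow> 'n sfun) \<Rightarrow> 'n sfun \<Rightarrow> 'n \<Rightarrow> 'n sfun" where
  "grad g f a x = (\<Sum>b\<in>UNIV. ginv g a b x * pd f b x)"

definition proj_pair :: "(real^'n::finite) set \<Rightarrow> ('n \<Rightarrow> 'n \<Rightarrow> 'n sfun) \<Rightarrow> ('n \<Rightarrow> 'n \<Rightarrow> 'n sfun) \<Rightarrow> ('n \<Rightarrow> 'n \<Rightarrow> 'n sfun) \<Rightarrow> bool" where
  "proj_pair U g P PP \<longleftrightarrow> (\<forall>a b. smooth_on U (P a b) \<and> smooth_on U (PP a b)) \<and>
    (\<forall>x\<in>U. \<forall>a b.
       P a b x = P b a x \<and> PP a b x = PP b a x \<and>
       P a b x + PP a b x = g a b x \<and>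
       (\<Sum>q\<in>UNIV. \<Sum>r\<in>UNIV. P a q x * ginv g q r x * P r b x) = P a b x \<and>
       (\<Sum>q\<in>UNIV. \<Sum>r\<in>UNIV. PP a q x * ginv g q r x * PP r b x) = PP a b x \<and>
       (\<Sum>q\<in>UNIV. \<Sum>r\<in>UNIV. P a q x * ginv g q r x * PP r b x) = 0)"

definition Mt :: "('n::finite \<Rightarrow> 'n \<Rightarrow> 'n sfun) \<Rightarrow> ('n \<Rightarrow> 'n \<Rightarrow> 'n sfun) \<Rightarrow> 'n \<Rightarrow> 'n \<Rightarrow> 'n \<Rightarrow> 'n sfun" where
  "Mt g P a b c x = nabla2 g P b a c x + nabla2 g P c a b x - nabla2 g P a b c x"

definition Ev :: "('n::finite \<Rightarrow> 'n \<Rightarrow> 'n sfun) \<Rightarrow> ('n \<Rightarrow> 'n \<Rightarrow> 'n sfun) \<Rightarrow> 'n \<Rightarrow> 'n sfun" where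
  "Ev g P a x = (\<Sum>c\<in>UNIV. \<Sum>b\<in>UNIV. Mt g P a c b x * up2 g P c b x)"

definition Wv :: "('n::finite \<Rightarrow> 'n \<Rightarrow> 'n sfun) \<Rightarrow> ('n \<Rightarrow> 'n \<Rightarrow> 'n sfun) \<Rightarrow> ('n \<Rightarrow> 'n \<Rightarrow> 'n sfun) \<Rightarrow> 'n \<Rightarrow> 'n sfun" where
  "Wv g P PP a x = - (\<Sum>c\<in>UNIV. \<Sum>b\<in>UNIV. Mt g P a c b x * up2 g PP c b x)"

definition Tt :: "('n::finite \<Rightarrow> 'n \<Rightarrow> 'n sfun) \<Rightarrow> ('n \<Rightarrow> 'n \<Rightarrow> 'n sfun) \<Rightarrow> ('n \<Rightarrow> 'n \<Rightarrow> 'n sfun) \<Rightarrow> nat \<Rightarrow> 'n \<Rightarrow> 'n \<Rightarrow> 'n \<Rightarrow> 'n sfun" where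
  "Tt g P PP p a b c x = Mt g P a b c x
     + Wv g P PP a x * PP b c x / (real CARD('n) - real p)
     - Ev g P a x * P b c x / real p"

text \<open>mixup g Q T a b c = g^{ae} Q_e{}^d T_{dbc}, i.e. A^a_{bc} (Q = P) or B^a_{bc} (Q = PP).\<close>
definition mixup :: "('n::finite \<Rightarrow> 'n \<Rightarrow> 'n sfun) \<Rightarrow> ('n \<Rightarrow> 'n \<Rightarrow> 'n sfun) \<Rightarrow> ('n \<Rightarrow> 'n \<Rightarrow> 'n \<Rightarrow> 'n sfun) \<Rightarrow> 'n \<Rightarrow> 'n \<Rightarrow> 'n \<Rightarrow> 'n sfun" where
  "mixup g Q T a b c x = (\<Sum>e\<in>UNIV. \<Sum>f\<in>UNIV. \<Sum>d\<in>UNIV.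
      ginv g a e x * Q e f x * ginv g f d x * T d b c x)"

definition lie1 :: "('n::finite \<Rightarrow> 'n sfun) \<Rightarrow> ('n \<Rightarrow> 'n sfun) \<Rightarrow> 'n \<Rightarrow> 'n sfun" where
  "lie1 xi E a x = (\<Sum>k\<in>UNIV. xi k x * pd (E a) k x) + (\<Sum>k\<in>UNIV. E k x * pd (xi k) a x)"

definition lie2 :: "('n::finite \<Rightarrow> 'n sfun) \<Rightarrow> ('n \<Rightarrow> 'n \<Rightarrow> 'n sfun) \<Rightarrow> 'n \<Rightarrow> 'n \<Rightarrow> 'n sfun" where
  "lie2 xi S a b x = (\<Sum>k\<in>UNIV. xi k x * pd (S a b) k x)
     + (\<Sum>k\<in>UNIV. S k b x * pd (xi k) a x) + (\<Sum>k\<in>UNIV. S a k x * pd (xi k) b x)"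

definition lie3 :: "('n::finite \<Rightarrow> 'n sfun) \<Rightarrow> ('n \<Rightarrow> 'n \<Rightarrow> 'n \<Rightarrow> 'n sfun) \<Rightarrow> 'n \<Rightarrow> 'n \<Rightarrow> 'n \<Rightarrow> 'n sfun" where
  "lie3 xi S a b c x = (\<Sum>k\<in>UNIV. xi k x * pd (S a b c) k x)
     + (\<Sum>k\<in>UNIV. S k b c x * pd (xi k) a x) + (\<Sum>k\<in>UNIV. S a k c x * pd (xi k) b x)
     + (\<Sum>k\<in>UNIV. S a b k x * pd (xi k) c x)"

definition lie12 :: "('n::finite \<Rightarrow> 'n sfun) \<Rightarrow> ('n \<Rightarrow> 'n \<Rightarrow> 'n \<Rightarrow> 'n sfun) \<Rightarrow> 'n \<Rightarrow> 'n \<Rightarrow> 'n \<Rightarrow> 'n sfun" where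
  "lie12 xi A a b c x = (\<Sum>k\<in>UNIV. xi k x * pd (A a b c) k x)
     - (\<Sum>k\<in>UNIV. A k b c x * pd (xi a) k x) + (\<Sum>k\<in>UNIV. A a k c x * pd (xi k) b x)
     + (\<Sum>k\<in>UNIV. A a b k x * pd (xi k) c x)"

definition biconformal :: "(real^'n::finite) set \<Rightarrow> ('n \<Rightarrow> 'n \<Rightarrow> 'n sfun) \<Rightarrow> ('n \<Rightarrow> 'n \<Rightarrow> 'n sfun)
    \<Rightarrow> ('n \<Rightarrow> 'n sfun) \<Rightarrow> 'n sfun \<Rightarrow> 'n sfun \<Rightarrow> bool" where
  "biconformal U P PP xi phi chi \<longleftrightarrow> (\<forall>k. smooth_on U (xi k)) \<and> smooth_on U phi \<and> smooth_on U chi \<and>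
     (\<forall>x\<in>U. \<forall>a b. lie2 xi P a b x = phi x * P a b x \<and> lie2 xi PP a b x = chi x * PP a b x)"

end

theory Submission
  imports Defs
begin

lemma pd_eq:
  fixes f :: "'n::finite sfun"
  assumes "(f has_derivative D) (at x)"
  shows "pd f i x = D (axis i 1)"
proof -
  have l: "((\<lambda>t::real. x + t *\<^sub>R axis i 1) has_derivative (\<lambda>t. t *\<^sub>R axis i 1)) (at 0)"
    by (auto intro!: derivative_eq_intros)
  have "((\<lambda>t::real. f (x + t *\<^sub>R axis i 1)) has_derivative (\<lambda>t. D (t *\<^sub>R axis i 1))) (at 0)"
    using has_derivative_compose[OF l, of f D] assms by simp
  moreover have "bounded_linear D" using assms has_derivative_bounded_linear by blast
  then have "(\<lambda>t. D (t *\<^sub>R axis i 1)) = (*) (D (axis i 1))"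
    by (simp add: linear.scaleR[OF bounded_linear.linear] fun_eq_iff mult.commute)
  ultimately have "((\<lambda>t::real. f (x + t *\<^sub>R axis i 1)) has_real_derivative D (axis i 1)) (at 0)"
    by (simp add: has_field_derivative_def mult.commute)
  then show ?thesis unfolding pd_def by (rule DERIV_imp_deriv)
qed

lemma pd_line_deriv:
  fixes f :: "'n::finite sfun"
  assumes "f differentiable (at (y + t *\<^sub>R axis i 1))"
  shows "((\<lambda>s. f (y + s *\<^sub>R axis i 1)) has_real_derivative pd f i (y + t *\<^sub>R axis i 1)) (at t)"
proof -
  obtain D where D: "(f has_derivative D) (at (y + t *\<^sub>R axis i 1))" using assms differentiable_def by blast
  have l: "((\<lambda>s::real. y + s *\<^sub>R axis i 1) has_derivative (\<lambda>s. s *\<^sub>R axis i 1)) (at t)"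
    by (auto intro!: derivative_eq_intros)
  have "((\<lambda>s::real. f (y + s *\<^sub>R axis i 1)) has_derivative (\<lambda>s. D (s *\<^sub>R axis i 1))) (at t)"
    using has_derivative_compose[OF l, of f D] D by simp
  moreover have "bounded_linear D" using D has_derivative_bounded_linear by blast
  then have "(\<lambda>s. D (s *\<^sub>R axis i 1)) = (*) (D (axis i 1))"
    by (simp add: linear.scaleR[OF bounded_linear.linear] fun_eq_iff mult.commute)
  ultimately show ?thesis using pd_eq[OF D, of i]
    by (simp add: has_field_derivative_def mult.commute)
qed

lemma pd_add: "f differentiable (at x) \<Longrightarrow> g differentiable (at x) \<Longrightarrow>
   pd (\<lambda>y. f y + g y) i x = pd f i x + pd g i x"
proof -
  assume "f differentiable (at x)" "g differentiable (at x)"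
  then obtain F G where F: "(f has_derivative F) (at x)" and G: "(g has_derivative G) (at x)"
    unfolding differentiable_def by blast
  show ?thesis using pd_eq[OF has_derivative_add[OF F G]] pd_eq[OF F] pd_eq[OF G] by simp
qed

lemma pd_diff: "f differentiable (at x) \<Longrightarrow> g differentiable (at x) \<Longrightarrow>
   pd (\<lambda>y. f y - g y) i x = pd f i x - pd g i x"
proof -
  assume "f differentiable (at x)" "g differentiable (at x)"
  then obtain F G where F: "(f has_derivative F) (at x)" and G: "(g has_derivative G) (at x)"
    unfolding differentiable_def by blast
  show ?thesis using pd_eq[OF has_derivative_diff[OF F G]] pd_eq[OF F] pd_eq[OF G] by simp
qed

lemma pd_minus: "f differentiable (at x) \<Longrightarrow>
   pd (\<lambda>y. - f y) i x = - pd f i x"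
proof -
  assume "f differentiable (at x)"
  then obtain F where F: "(f has_derivative F) (at x)"
    unfolding differentiable_def by blast
  show ?thesis using pd_eq[OF has_derivative_minus[OF F]] pd_eq[OF F] by simp
qed

lemma pd_mult: "f differentiable (at x) \<Longrightarrow> g differentiable (at x) \<Longrightarrow>
   pd (\<lambda>y. f y * g y) i x = f x * pd g i x + pd f i x * g x"
proof -
  assume "f differentiable (at x)" "g differentiable (at x)"
  then obtain F G where F: "(f has_derivative F) (at x)" and G: "(g has_derivative G) (at x)"
    unfolding differentiable_def by blast
  show ?thesis using pd_eq[OF has_derivative_mult[OF F G]] pd_eq[OF F] pd_eq[OF G] by simp
qed

lemma pd_const: "pd (\<lambda>y. c) i x = 0"
  unfolding pd_def by simp

lemma pd_cmult: "f differentiable (at x) \<Longrightarrow> pd (\<lambda>y. c * f y) i x = c * pd f i x"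
  by (simp add: pd_mult pd_const)

lemma pd_divc: "f differentiable (at x) \<Longrightarrow> pd (\<lambda>y. f y / c) i x = pd f i x / c"
  using pd_cmult[of f x "1/c"] by simp

lemma pd_sum: "finite S \<Longrightarrow> (\<And>k. k \<in> S \<Longrightarrow> f k differentiable (at x)) \<Longrightarrow>
   pd (\<lambda>y. \<Sum>k\<in>S. f k y) i x = (\<Sum>k\<in>S. pd (f k) i x)"
proof (induction S rule: finite_induct)
  case empty then show ?case by (simp add: pd_const)
next
  case (insert a S)
  have d: "(\<lambda>y. \<Sum>k\<in>S. f k y) differentiable (at x)"
    using insert by (auto intro!: differentiable_sum)
  have "pd (\<lambda>y. \<Sum>k\<in>insert a S. f k y) i x = pd (\<lambda>y. f a y + (\<Sum>k\<in>S. f k y)) i x"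
    using insert by simp
  also have "\<dots> = pd (f a) i x + pd (\<lambda>y. \<Sum>k\<in>S. f k y) i x"
    using pd_add[OF _ d, of "f a"] insert by simp
  finally show ?case using insert by simp
qed

lemma pd_local:
  fixes f g :: "'n::finite sfun"
  assumes "open U" "x \<in> U" "\<And>y. y \<in> U \<Longrightarrow> f y = g y"
  shows "pd f i x = pd g i x"
proof -
  have c: "\<And>t. continuous (at t) (\<lambda>t::real. x + t *\<^sub>R axis i 1)" by (intro continuous_intros)
  have "open ((\<lambda>t::real. x + t *\<^sub>R axis i 1) -` U)"
    using continuous_open_vimage[OF assms(1) c] by blast
  then have "eventually (\<lambda>t. x + t *\<^sub>R axis i 1 \<in> U) (nhds 0)"
    unfolding eventually_nhds using assms(2) by (intro exI[of _ "(\<lambda>t::real. x + t *\<^sub>R axis i 1) -` U"]) auto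
  then have "eventually (\<lambda>t. f (x + t *\<^sub>R axis i 1) = g (x + t *\<^sub>R axis i 1)) (nhds 0)"
    by (rule eventually_mono) (simp add: assms(3))
  then show ?thesis unfolding pd_def by (rule deriv_cong_ev) simp
qed

lemma differentiable_local:
  fixes f g :: "'n::finite sfun"
  assumes "open U" "x \<in> U" "\<And>y. y \<in> U \<Longrightarrow> f y = g y" "f differentiable (at x)"
  shows "g differentiable (at x)"
  using assms has_derivative_transform_within_open unfolding differentiable_def by blast

lemma iter_pd_append: "iter_pd (is @ [i]) f = iter_pd is (pd f i)"
  by (induction "is") auto

lemma smooth_pd: "smooth_on U f \<Longrightarrow> smooth_on U (pd f i)"
  unfolding smooth_on_def by (metis iter_pd_append)

lemma smooth_diff: "smooth_on U f \<Longrightarrow> x \<in> U \<Longrightarrow> f differentiable (at x)"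
  unfolding smooth_on_def by (metis iter_pd.simps(1))

lemma schwarz_half:
  fixes f :: "'n::finite sfun"
  assumes U: "open U" "x \<in> U" and fd: "\<forall>y\<in>U. f differentiable (at y)"
    and D: "(pd f i has_derivative D) (at x)" and e: "e > 0"
  shows "\<exists>\<delta>>0. \<forall>h. 0 < h \<and> h < \<delta> \<longrightarrow>
     \<bar>f (x + h *\<^sub>R axis j 1 + h *\<^sub>R axis i 1) - f (x + h *\<^sub>R axis i 1) - f (x + h *\<^sub>R axis j 1) + f x
       - h * (h * D (axis j 1))\<bar> \<le> e * (h * h)"
proof -
  obtain r where r: "r > 0" "ball x r \<subseteq> U" using U open_contains_ball by blast
  have bl: "bounded_linear D" using D has_derivative_bounded_linear by blast
  obtain d1 where d1: "d1 > 0" and d1h: "\<forall>y. norm (y - x) < d1 \<longrightarrow>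
      norm (pd f i y - pd f i x - D (y - x)) \<le> (e/3) * norm (y - x)"
    using D e unfolding has_derivative_at_alt by (meson divide_pos_pos zero_less_numeral)
  define \<delta> where "\<delta> = min (r/2) (d1/2)"
  have "\<delta> > 0" using r d1 by (simp add: \<delta>_def)
  moreover have "\<forall>h. 0 < h \<and> h < \<delta> \<longrightarrow>
     \<bar>f (x + h *\<^sub>R axis j 1 + h *\<^sub>R axis i 1) - f (x + h *\<^sub>R axis i 1) - f (x + h *\<^sub>R axis j 1) + f x
       - h * (h * D (axis j 1))\<bar> \<le> e * (h * h)"
  proof (intro allI impI)
    fix h :: real assume h: "0 < h \<and> h < \<delta>"
    let ?ei = "axis i 1 :: real^'n" and ?ej = "axis j 1 :: real^'n"
    have nei: "norm ?ei = 1" "norm ?ej = 1" by simp_all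
    define y where "y = x + h *\<^sub>R ?ej"
    define u where "u = (\<lambda>t. f (y + t *\<^sub>R ?ei) - f (x + t *\<^sub>R ?ei))"
    have inU1: "y + t *\<^sub>R ?ei \<in> U" if "0 \<le> t" "t \<le> h" for t
    proof -
      have "norm (y + t *\<^sub>R ?ei - x) \<le> h + t" unfolding y_def
        using norm_triangle_ineq[of "h *\<^sub>R ?ej" "t *\<^sub>R ?ei"] nei h that by simp
      then show ?thesis using r h that unfolding \<delta>_def by (intro subsetD[OF r(2)]) (simp add: dist_norm norm_minus_commute)
    qed
    have inU2: "x + t *\<^sub>R ?ei \<in> U" if "0 \<le> t" "t \<le> h" for t
    proof -
      have "norm (x + t *\<^sub>R ?ei - x) \<le> h" using nei that by simp
      then show ?thesis using r h that unfolding \<delta>_def by (intro subsetD[OF r(2)]) (simp add: dist_norm norm_minus_commute)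
    qed
    have uder: "(u has_real_derivative (pd f i (y + t *\<^sub>R ?ei) - pd f i (x + t *\<^sub>R ?ei))) (at t)"
      if "0 \<le> t" "t \<le> h" for t
      unfolding u_def using inU1[OF that] inU2[OF that] fd
      by (intro DERIV_diff pd_line_deriv) auto
    have cont: "continuous_on {0..h} u"
      using uder by (intro DERIV_continuous_on[where D="\<lambda>t. _ t"]) (auto intro: has_field_derivative_at_within)
    obtain l z where z: "0 < z" "z < h" and lz: "(u has_real_derivative l) (at z)" and ul: "u h - u 0 = (h - 0) * l"
    proof -
      have "\<And>t. 0 < t \<Longrightarrow> t < h \<Longrightarrow> u differentiable (at t)"
        unfolding real_differentiable_def using uder by (meson less_eq_real_def)
      from MVT[OF _ cont this] h show ?thesis using that by auto
    qed
    have l: "l = pd f i (y + z *\<^sub>R ?ei) - pd f i (x + z *\<^sub>R ?ei)"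
      using DERIV_unique[OF lz uder[of z]] z by simp
    have n1: "norm (y + z *\<^sub>R ?ei - x) \<le> 2 * h" unfolding y_def
      using norm_triangle_ineq[of "h *\<^sub>R ?ej" "z *\<^sub>R ?ei"] nei h z by simp
    have n2: "norm (x + z *\<^sub>R ?ei - x) \<le> h" using nei z by simp
    have r1: "\<bar>pd f i (y + z *\<^sub>R ?ei) - pd f i x - D (y + z *\<^sub>R ?ei - x)\<bar> \<le> (e/3) * (2*h)"
    proof -
      have "norm (y + z *\<^sub>R ?ei - x) < d1" using n1 h unfolding \<delta>_def by simp
      then have "\<bar>pd f i (y + z *\<^sub>R ?ei) - pd f i x - D (y + z *\<^sub>R ?ei - x)\<bar> \<le> (e/3) * norm (y + z *\<^sub>R ?ei - x)"
        using d1h[rule_format, of "y + z *\<^sub>R ?ei"] by (simp only: real_norm_def)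
      also have "\<dots> \<le> (e/3) * (2*h)" using n1 e by (intro mult_left_mono) auto
      finally show ?thesis .
    qed
    have r2: "\<bar>pd f i (x + z *\<^sub>R ?ei) - pd f i x - D (x + z *\<^sub>R ?ei - x)\<bar> \<le> (e/3) * h"
    proof -
      have "norm (x + z *\<^sub>R ?ei - x) < d1" using n2 h unfolding \<delta>_def by simp
      then have "\<bar>pd f i (x + z *\<^sub>R ?ei) - pd f i x - D (x + z *\<^sub>R ?ei - x)\<bar> \<le> (e/3) * norm (x + z *\<^sub>R ?ei - x)"
        using d1h[rule_format, of "x + z *\<^sub>R ?ei"] by (simp only: real_norm_def)
      also have "\<dots> \<le> (e/3) * h" using n2 e by (intro mult_left_mono) auto
      finally show ?thesis .
    qed
    have lin: "D (y + z *\<^sub>R ?ei - x) = h * D ?ej + D (x + z *\<^sub>R ?ei - x)"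
      unfolding y_def using bl
      by (simp add: linear_simps(1) linear.scaleR[OF bounded_linear.linear] algebra_simps)
    have "\<bar>l - h * D ?ej\<bar> \<le> e * h" using r1 r2 lin unfolding l abs_le_iff by linarith
    moreover have "h * l - h * (h * D ?ej) = h * (l - h * D ?ej)" by (simp add: algebra_simps)
    ultimately have "\<bar>h * l - h * (h * D ?ej)\<bar> \<le> h * (e * h)"
      using h by (simp add: abs_mult)
    moreover have "u h - u 0 = f (x + h *\<^sub>R ?ej + h *\<^sub>R ?ei) - f (x + h *\<^sub>R ?ei) - f (x + h *\<^sub>R ?ej) + f x"
      unfolding u_def y_def by simp
    ultimately show "\<bar>f (x + h *\<^sub>R ?ej + h *\<^sub>R ?ei) - f (x + h *\<^sub>R ?ei) - f (x + h *\<^sub>R ?ej) + f x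
       - h * (h * D ?ej)\<bar> \<le> e * (h * h)" using ul by (simp add: algebra_simps)
  qed
  ultimately show ?thesis by blast
qed

lemma schwarz:
  fixes f :: "'n::finite sfun"
  assumes U: "open U" "x \<in> U" and fd: "\<forall>y\<in>U. f differentiable (at y)"
    and di: "pd f i differentiable (at x)" and dj: "pd f j differentiable (at x)"
  shows "pd (pd f i) j x = pd (pd f j) i x"
proof -
  obtain Di where Di: "(pd f i has_derivative Di) (at x)" using di differentiable_def by blast
  obtain Dj where Dj: "(pd f j has_derivative Dj) (at x)" using dj differentiable_def by blast
  have a: "pd (pd f i) j x = Di (axis j 1)" by (rule pd_eq[OF Di])
  have b: "pd (pd f j) i x = Dj (axis i 1)" by (rule pd_eq[OF Dj])
  have "\<bar>Di (axis j 1) - Dj (axis i 1)\<bar> \<le> 2 * e" if e: "e > 0" for e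
  proof -
    obtain d1 where d1: "d1 > 0" "\<forall>h. 0 < h \<and> h < d1 \<longrightarrow>
     \<bar>f (x + h *\<^sub>R axis j 1 + h *\<^sub>R axis i 1) - f (x + h *\<^sub>R axis i 1) - f (x + h *\<^sub>R axis j 1) + f x
       - h * (h * Di (axis j 1))\<bar> \<le> e * (h * h)"
      using schwarz_half[OF U fd Di e, of j] by blast
    obtain d2 where d2: "d2 > 0" "\<forall>h. 0 < h \<and> h < d2 \<longrightarrow>
     \<bar>f (x + h *\<^sub>R axis i 1 + h *\<^sub>R axis j 1) - f (x + h *\<^sub>R axis j 1) - f (x + h *\<^sub>R axis i 1) + f x
       - h * (h * Dj (axis i 1))\<bar> \<le> e * (h * h)"
      using schwarz_half[OF U fd Dj e, of i] by blast
    define h where "h = min d1 d2 / 2"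
    have h: "0 < h" "h < d1" "h < d2" using d1 d2 by (auto simp: h_def)
    have c: "x + h *\<^sub>R axis i 1 + h *\<^sub>R axis j 1 = x + h *\<^sub>R axis j 1 + h *\<^sub>R axis i 1" by (simp add: algebra_simps)
    have "\<bar>h * (h * Di (axis j 1)) - h * (h * Dj (axis i 1))\<bar> \<le> 2 * e * (h * h)"
      using d1(2)[rule_format, of h] d2(2)[rule_format, of h] h unfolding c by (simp add: abs_le_iff)
    moreover have "h * (h * Di (axis j 1)) - h * (h * Dj (axis i 1)) = (h*h) * (Di (axis j 1) - Dj (axis i 1))"
      by (simp add: algebra_simps)
    ultimately have "(h*h) * \<bar>Di (axis j 1) - Dj (axis i 1)\<bar> \<le> (h*h) * (2 * e)"
      by (simp add: abs_mult mult.commute mult.left_commute)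
    then show ?thesis using h by (simp add: mult_le_cancel_left_pos)
  qed
  then have "Di (axis j 1) = Dj (axis i 1)"
  proof -
    assume H: "\<And>e. e > 0 \<Longrightarrow> \<bar>Di (axis j 1) - Dj (axis i 1)\<bar> \<le> 2 * e"
    show ?thesis
    proof (rule ccontr)
      assume "Di (axis j 1) \<noteq> Dj (axis i 1)"
      then have "\<bar>Di (axis j 1) - Dj (axis i 1)\<bar> > 0" by simp
      from H[OF divide_pos_pos[OF this, of 4]] this show False by simp
    qed
  qed
  then show ?thesis using a b by simp
qed

lemma differentiable_prod_at:
  fixes f :: "'i \<Rightarrow> 'a::real_normed_vector \<Rightarrow> real"
  assumes "\<And>i. i \<in> I \<Longrightarrow> f i differentiable (at x)"
  shows "(\<lambda>x. \<Prod>i\<in>I. f i x) differentiable (at x)"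
proof -
  from assms have "\<forall>i\<in>I. \<exists>D. (f i has_derivative D) (at x)" unfolding differentiable_def by blast
  then obtain D where "\<forall>i\<in>I. (f i has_derivative D i) (at x)" by metis
  then show ?thesis unfolding differentiable_def by (blast intro: has_derivative_prod)
qed

lemma det_fun_differentiable:
  fixes F :: "'n::finite \<Rightarrow> 'n \<Rightarrow> 'm::finite sfun"
  assumes "\<And>i j. F i j differentiable (at x)"
  shows "(\<lambda>y. det (\<chi> i j. F i j y)) differentiable (at x)"
  unfolding det_def using assms
  by (auto intro!: differentiable_sum differentiable_mult differentiable_prod_at)

lemma metric_inv:
  assumes "metric_on U g" "x \<in> U"
  shows "gmat g x ** matrix_inv (gmat g x) = mat 1 \<and> matrix_inv (gmat g x) ** gmat g x = mat 1"
proof -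
  have "invertible (gmat g x)" using assms invertible_det_nz unfolding metric_on_def by blast
  then show ?thesis unfolding invertible_def matrix_inv_def by (rule someI_ex)
qed

lemma ginv_left:
  assumes "metric_on U g" "x \<in> U"
  shows "(\<Sum>j\<in>UNIV. ginv g i j x * g j k x) = (if i = k then 1 else 0)"
proof -
  have "(matrix_inv (gmat g x) ** gmat g x) $ i $ k = mat 1 $ i $ k" using metric_inv[OF assms] by simp
  then show ?thesis by (simp add: matrix_matrix_mult_def mat_def ginv_def gmat_def)
qed

lemma ginv_right:
  assumes "metric_on U g" "x \<in> U"
  shows "(\<Sum>j\<in>UNIV. g i j x * ginv g j k x) = (if i = k then 1 else 0)"
proof -
  have "(gmat g x ** matrix_inv (gmat g x)) $ i $ k = mat 1 $ i $ k" using metric_inv[OF assms] by simp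
  then show ?thesis by (simp add: matrix_matrix_mult_def mat_def ginv_def gmat_def)
qed

lemma ginv_sym:
  assumes "metric_on U g" "x \<in> U"
  shows "ginv g i j x = ginv g j i x"
proof -
  let ?A = "gmat g x" and ?B = "matrix_inv (gmat g x)"
  have As: "transpose ?A = ?A" using assms unfolding metric_on_def
    by (simp add: transpose_def gmat_def vec_eq_iff)
  have tm: "transpose (mat 1 :: real^'a^'a) = mat 1" by (simp add: transpose_def mat_def vec_eq_iff)
  have "transpose ?B ** ?A = mat 1"
    using arg_cong[OF conjunct1[OF metric_inv[OF assms]], of transpose]
    by (simp add: matrix_transpose_mul As tm)
  then have "transpose ?B = ?B"
    by (metis matrix_mul_assoc matrix_mul_lid matrix_mul_rid metric_inv[OF assms])
  then have "transpose ?B $ j $ i = ?B $ j $ i" by simp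
  then show ?thesis by (simp add: ginv_def transpose_def)
qed

lemma ginv_cramer:
  assumes "metric_on U g" "x \<in> U"
  shows "ginv g i j x = det (\<chi> r l. if l = i then (if r = j then 1 else 0) else g r l x) / det (gmat g x)"
proof -
  let ?A = "gmat g x" and ?B = "matrix_inv (gmat g x)"
  have d: "det ?A \<noteq> 0" using assms unfolding metric_on_def by blast
  have "?A *v (?B *v axis j 1) = axis j 1"
    using metric_inv[OF assms] by (simp add: matrix_vector_mul_assoc)
  then have "?B *v axis j 1 = (\<chi> k. det(\<chi> r l. if l=k then (axis j 1 :: real^_)$r else ?A$r$l) / det ?A)"
    using cramer[OF d] by blast
  then have "(?B *v axis j 1) $ i = det(\<chi> r l. if l=i then (axis j 1 :: real^_)$r else ?A$r$l) / det ?A"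
    by simp
  moreover have "(?B *v axis j 1) $ i = ?B $ i $ j" by (simp add: matrix_vector_mult_basis column_def)
  moreover have "(\<chi> r l. if l=i then (axis j 1 :: real^_)$r else ?A$r$l) = (\<chi> r l. if l = i then (if r = j then 1 else 0) else g r l x)"
    by (simp add: axis_def gmat_def vec_eq_iff)
  ultimately show ?thesis by (simp add: ginv_def)
qed

lemma ginv_differentiable:
  assumes "metric_on U g" "x \<in> U"
  shows "ginv g i j differentiable (at x)"
proof -
  have gd: "\<And>r l. g r l differentiable (at x)" using assms smooth_diff unfolding metric_on_def by blast
  have dF: "(\<lambda>y. det (\<chi> r l. if l = i then (if r = j then 1 else 0) else g r l y) / det (gmat g y)) differentiable (at x)"
  proof -
    have gd': "\<And>r l. (\<lambda>y. if l = i then (if r = j then 1 else 0) else g r l y) differentiable (at x)"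
      subgoal for r l by (cases "l = i") (simp_all add: gd)
      done
    show ?thesis
      using assms unfolding gmat_def metric_on_def
      by (intro differentiable_divide det_fun_differentiable gd' gd) auto
  qed
  have eq: "\<And>y. y \<in> U \<Longrightarrow> det (\<chi> r l. if l = i then (if r = j then 1 else 0) else g r l y) / det (gmat g y) = ginv g i j y"
    using ginv_cramer[OF assms(1)] by simp
  have Uo: "open U" using assms unfolding metric_on_def by blast
  show ?thesis by (rule differentiable_local[OF Uo assms(2) eq dF])
qed

lemma pd_ginv:
  assumes "metric_on U g" "x \<in> U"
  shows "pd (ginv g a b) k x = - (\<Sum>m\<in>UNIV. \<Sum>n\<in>UNIV. ginv g a m x * pd (g m n) k x * ginv g n b x)"
proof -
  have U: "open U" using assms unfolding metric_on_def by blast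
  have gd: "\<And>r l. g r l differentiable (at x)" using assms smooth_diff unfolding metric_on_def by blast
  have gi: "\<And>r l. ginv g r l differentiable (at x)" using ginv_differentiable[OF assms] by blast
  have z: "(\<Sum>j\<in>UNIV. ginv g a j x * pd (g j m) k x + pd (ginv g a j) k x * g j m x) = 0" for m
  proof -
    have "pd (\<lambda>y. \<Sum>j\<in>UNIV. ginv g a j y * g j m y) k x = pd (\<lambda>y. if a = m then 1 else 0) k x"
      by (rule pd_local[OF U assms(2)]) (simp add: ginv_left[OF assms(1)])
    then show ?thesis by (simp add: pd_sum pd_mult gd gi pd_const)
  qed
  have "pd (ginv g a b) k x = (\<Sum>m\<in>UNIV. pd (ginv g a m) k x * (if m = b then 1 else 0))"
    by (simp add: if_distrib cong: if_cong)
  also have "\<dots> = (\<Sum>m\<in>UNIV. pd (ginv g a m) k x * (\<Sum>n\<in>UNIV. g m n x * ginv g n b x))"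
    by (simp add: ginv_right[OF assms])
  also have "\<dots> = (\<Sum>n\<in>UNIV. (\<Sum>m\<in>UNIV. pd (ginv g a m) k x * g m n x) * ginv g n b x)"
    by (simp add: sum_distrib_left sum_distrib_right mult.assoc) (rule sum.swap)
  also have "\<dots> = (\<Sum>n\<in>UNIV. (- (\<Sum>m\<in>UNIV. ginv g a m x * pd (g m n) k x)) * ginv g n b x)"
  proof -
    have z': "(\<Sum>j\<in>UNIV. pd (ginv g a j) k x * g j m x) = - (\<Sum>j\<in>UNIV. ginv g a j x * pd (g j m) k x)" for m
      using z[of m] by (simp add: sum.distrib eq_neg_iff_add_eq_0 add.commute)
    show ?thesis by (simp add: z')
  qed
  also have "\<dots> = - (\<Sum>m\<in>UNIV. \<Sum>n\<in>UNIV. ginv g a m x * pd (g m n) k x * ginv g n b x)"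
    by (simp add: sum_distrib_right sum_negf) (rule sum.swap)
  finally show ?thesis .
qed

definition lie11 :: "('n::finite \<Rightarrow> 'n sfun) \<Rightarrow> ('n \<Rightarrow> 'n \<Rightarrow> 'n sfun) \<Rightarrow> 'n \<Rightarrow> 'n \<Rightarrow> 'n sfun" where
  "lie11 xi Q a l x = (\<Sum>k\<in>UNIV. xi k x * pd (Q a l) k x) + (\<Sum>k\<in>UNIV. Q k l x * pd (xi k) a x)
     - (\<Sum>k\<in>UNIV. Q a k x * pd (xi l) k x)"

definition lie20 :: "('n::finite \<Rightarrow> 'n sfun) \<Rightarrow> ('n \<Rightarrow> 'n \<Rightarrow> 'n sfun) \<Rightarrow> 'n \<Rightarrow> 'n \<Rightarrow> 'n sfun" where
  "lie20 xi G a b x = (\<Sum>k\<in>UNIV. xi k x * pd (G a b) k x) - (\<Sum>k\<in>UNIV. G k b x * pd (xi a) k x)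
     - (\<Sum>k\<in>UNIV. G a k x * pd (xi b) k x)"

lemma rot3: "(\<Sum>k\<in>A. \<Sum>c\<in>B. \<Sum>b\<in>C. H k c b) = (\<Sum>c\<in>B. \<Sum>b\<in>C. \<Sum>k\<in>A. H k c b)"
proof -
  have "(\<Sum>k\<in>A. \<Sum>c\<in>B. \<Sum>b\<in>C. H k c b) = (\<Sum>c\<in>B. \<Sum>k\<in>A. \<Sum>b\<in>C. H k c b)" by (rule sum.swap)
  also have "\<dots> = (\<Sum>c\<in>B. \<Sum>b\<in>C. \<Sum>k\<in>A. H k c b)" by (rule sum.cong[OF refl]) (rule sum.swap)
  finally show ?thesis .
qed

lemma swap_inner: "(\<Sum>c\<in>A. \<Sum>b\<in>B. \<Sum>k\<in>C. F c b k) = (\<Sum>c\<in>A. \<Sum>k\<in>C. \<Sum>b\<in>B. F c b k)"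
  by (rule sum.cong[OF refl]) (rule sum.swap)

lemma swap3: "(\<Sum>c\<in>A. \<Sum>b\<in>B. \<Sum>k\<in>C. F c b k) = (\<Sum>k\<in>C. \<Sum>b\<in>B. \<Sum>c\<in>A. F c b k)"
proof -
  have "(\<Sum>c\<in>A. \<Sum>b\<in>B. \<Sum>k\<in>C. F c b k) = (\<Sum>b\<in>B. \<Sum>c\<in>A. \<Sum>k\<in>C. F c b k)" by (rule sum.swap)
  also have "\<dots> = (\<Sum>b\<in>B. \<Sum>k\<in>C. \<Sum>c\<in>A. F c b k)" by (rule sum.cong[OF refl]) (rule sum.swap)
  also have "\<dots> = (\<Sum>k\<in>C. \<Sum>b\<in>B. \<Sum>c\<in>A. F c b k)" by (rule sum.swap)
  finally show ?thesis .
qed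

lemma leib_a:
  fixes Q :: "'n::finite \<Rightarrow> 'n \<Rightarrow> 'n sfun"
  assumes dQ: "\<And>a l. Q a l differentiable (at x)" and dR: "\<And>l b c. R l b c differentiable (at x)"
  shows "lie3 xi (\<lambda>a b c y. \<Sum>l\<in>UNIV. Q a l y * R l b c y) a b c x
    = (\<Sum>l\<in>UNIV. lie11 xi Q a l x * R l b c x) + (\<Sum>l\<in>UNIV. Q a l x * lie3 xi R l b c x)"
proof -
  have pdE: "\<And>k. pd (\<lambda>y. \<Sum>l\<in>UNIV. Q a l y * R l b c y) k x
      = (\<Sum>l\<in>UNIV. Q a l x * pd (R l b c) k x) + (\<Sum>l\<in>UNIV. pd (Q a l) k x * R l b c x)"
    by (simp add: pd_sum pd_mult dQ dR sum.distrib)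
  have t1: "(\<Sum>k\<in>UNIV. xi k x * (\<Sum>l\<in>UNIV. Q a l x * pd (R l b c) k x))
      = (\<Sum>l\<in>UNIV. Q a l x * (\<Sum>k\<in>UNIV. xi k x * pd (R l b c) k x))"
    by (simp only: sum_distrib_left sum_distrib_right) (subst sum.swap, simp add: mult_ac)
  have t2: "(\<Sum>k\<in>UNIV. xi k x * (\<Sum>l\<in>UNIV. pd (Q a l) k x * R l b c x))
      = (\<Sum>l\<in>UNIV. (\<Sum>k\<in>UNIV. xi k x * pd (Q a l) k x) * R l b c x)"
    by (simp only: sum_distrib_left sum_distrib_right) (subst sum.swap, simp add: mult_ac)
  have t3: "(\<Sum>k\<in>UNIV. (\<Sum>l\<in>UNIV. Q k l x * R l b c x) * pd (xi k) a x)
      = (\<Sum>l\<in>UNIV. (\<Sum>k\<in>UNIV. Q k l x * pd (xi k) a x) * R l b c x)"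
    by (simp only: sum_distrib_left sum_distrib_right) (subst sum.swap, simp add: mult_ac)
  have t4: "(\<Sum>k\<in>UNIV. (\<Sum>l\<in>UNIV. Q a l x * R l k c x) * pd (xi k) b x)
      = (\<Sum>l\<in>UNIV. Q a l x * (\<Sum>k\<in>UNIV. R l k c x * pd (xi k) b x))"
    by (simp only: sum_distrib_left sum_distrib_right) (subst sum.swap, simp add: mult_ac)
  have t5: "(\<Sum>k\<in>UNIV. (\<Sum>l\<in>UNIV. Q a l x * R l b k x) * pd (xi k) c x)
      = (\<Sum>l\<in>UNIV. Q a l x * (\<Sum>k\<in>UNIV. R l b k x * pd (xi k) c x))"
    by (simp only: sum_distrib_left sum_distrib_right) (subst sum.swap, simp add: mult_ac)
  have cr: "(\<Sum>l\<in>UNIV. (\<Sum>k\<in>UNIV. Q a k x * pd (xi l) k x) * R l b c x)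
      = (\<Sum>l\<in>UNIV. Q a l x * (\<Sum>k\<in>UNIV. R k b c x * pd (xi k) l x))"
    by (simp only: sum_distrib_left sum_distrib_right) (subst sum.swap, simp add: mult_ac)
  have L: "lie3 xi (\<lambda>a b c y. \<Sum>l\<in>UNIV. Q a l y * R l b c y) a b c x
     = (\<Sum>k\<in>UNIV. xi k x * (\<Sum>l\<in>UNIV. Q a l x * pd (R l b c) k x))
     + (\<Sum>k\<in>UNIV. xi k x * (\<Sum>l\<in>UNIV. pd (Q a l) k x * R l b c x))
     + (\<Sum>k\<in>UNIV. (\<Sum>l\<in>UNIV. Q k l x * R l b c x) * pd (xi k) a x)
     + (\<Sum>k\<in>UNIV. (\<Sum>l\<in>UNIV. Q a l x * R l k c x) * pd (xi k) b x)
     + (\<Sum>k\<in>UNIV. (\<Sum>l\<in>UNIV. Q a l x * R l b k x) * pd (xi k) c x)"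
    unfolding lie3_def pdE by (simp add: ring_distribs sum.distrib)
  have R: "(\<Sum>l\<in>UNIV. lie11 xi Q a l x * R l b c x) + (\<Sum>l\<in>UNIV. Q a l x * lie3 xi R l b c x)
     = (\<Sum>l\<in>UNIV. (\<Sum>k\<in>UNIV. xi k x * pd (Q a l) k x) * R l b c x)
     + (\<Sum>l\<in>UNIV. (\<Sum>k\<in>UNIV. Q k l x * pd (xi k) a x) * R l b c x)
     - (\<Sum>l\<in>UNIV. (\<Sum>k\<in>UNIV. Q a k x * pd (xi l) k x) * R l b c x)
     + (\<Sum>l\<in>UNIV. Q a l x * (\<Sum>k\<in>UNIV. xi k x * pd (R l b c) k x))
     + (\<Sum>l\<in>UNIV. Q a l x * (\<Sum>k\<in>UNIV. R k b c x * pd (xi k) l x))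
     + (\<Sum>l\<in>UNIV. Q a l x * (\<Sum>k\<in>UNIV. R l k c x * pd (xi k) b x))
     + (\<Sum>l\<in>UNIV. Q a l x * (\<Sum>k\<in>UNIV. R l b k x * pd (xi k) c x))"
    unfolding lie3_def lie11_def by (simp add: ring_distribs sum.distrib sum_subtractf)
  show ?thesis using L R t1 t2 t3 t4 t5 cr by linarith
qed

lemma leib_b:
  fixes S :: "'n::finite \<Rightarrow> 'n \<Rightarrow> 'n sfun"
  assumes dS: "\<And>a k. S a k differentiable (at x)" and dG: "\<And>k l. G k l differentiable (at x)"
  shows "lie11 xi (\<lambda>a l y. \<Sum>k\<in>UNIV. S a k y * G k l y) a l x
    = (\<Sum>k\<in>UNIV. lie2 xi S a k x * G k l x) + (\<Sum>k\<in>UNIV. S a k x * lie20 xi G k l x)"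
proof -
  have pdE: "\<And>m. pd (\<lambda>y. \<Sum>k\<in>UNIV. S a k y * G k l y) m x
      = (\<Sum>k\<in>UNIV. S a k x * pd (G k l) m x) + (\<Sum>k\<in>UNIV. pd (S a k) m x * G k l x)"
    by (simp add: pd_sum pd_mult dS dG sum.distrib)
  have u1: "(\<Sum>m\<in>UNIV. xi m x * (\<Sum>k\<in>UNIV. S a k x * pd (G k l) m x))
      = (\<Sum>k\<in>UNIV. S a k x * (\<Sum>m\<in>UNIV. xi m x * pd (G k l) m x))"
    by (simp only: sum_distrib_left sum_distrib_right) (subst sum.swap, simp add: mult_ac)
  have u2: "(\<Sum>m\<in>UNIV. xi m x * (\<Sum>k\<in>UNIV. pd (S a k) m x * G k l x))
      = (\<Sum>k\<in>UNIV. (\<Sum>m\<in>UNIV. xi m x * pd (S a k) m x) * G k l x)"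
    by (simp only: sum_distrib_left sum_distrib_right) (subst sum.swap, simp add: mult_ac)
  have u3: "(\<Sum>m\<in>UNIV. (\<Sum>k\<in>UNIV. S m k x * G k l x) * pd (xi m) a x)
      = (\<Sum>k\<in>UNIV. (\<Sum>m\<in>UNIV. S m k x * pd (xi m) a x) * G k l x)"
    by (simp only: sum_distrib_left sum_distrib_right) (subst sum.swap, simp add: mult_ac)
  have u4: "(\<Sum>m\<in>UNIV. (\<Sum>k\<in>UNIV. S a k x * G k m x) * pd (xi l) m x)
      = (\<Sum>k\<in>UNIV. S a k x * (\<Sum>m\<in>UNIV. G k m x * pd (xi l) m x))"
    by (simp only: sum_distrib_left sum_distrib_right) (subst sum.swap, simp add: mult_ac)
  have cr: "(\<Sum>k\<in>UNIV. (\<Sum>m\<in>UNIV. S a m x * pd (xi m) k x) * G k l x)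
      = (\<Sum>k\<in>UNIV. S a k x * (\<Sum>m\<in>UNIV. G m l x * pd (xi k) m x))"
    by (simp only: sum_distrib_left sum_distrib_right) (subst sum.swap, simp add: mult_ac)
  have L: "lie11 xi (\<lambda>a l y. \<Sum>k\<in>UNIV. S a k y * G k l y) a l x
     = (\<Sum>m\<in>UNIV. xi m x * (\<Sum>k\<in>UNIV. S a k x * pd (G k l) m x))
     + (\<Sum>m\<in>UNIV. xi m x * (\<Sum>k\<in>UNIV. pd (S a k) m x * G k l x))
     + (\<Sum>m\<in>UNIV. (\<Sum>k\<in>UNIV. S m k x * G k l x) * pd (xi m) a x)
     - (\<Sum>m\<in>UNIV. (\<Sum>k\<in>UNIV. S a k x * G k m x) * pd (xi l) m x)"
    unfolding lie11_def pdE by (simp add: ring_distribs sum.distrib)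
  have R: "(\<Sum>k\<in>UNIV. lie2 xi S a k x * G k l x) + (\<Sum>k\<in>UNIV. S a k x * lie20 xi G k l x)
     = (\<Sum>k\<in>UNIV. (\<Sum>m\<in>UNIV. xi m x * pd (S a k) m x) * G k l x)
     + (\<Sum>k\<in>UNIV. (\<Sum>m\<in>UNIV. S m k x * pd (xi m) a x) * G k l x)
     + (\<Sum>k\<in>UNIV. (\<Sum>m\<in>UNIV. S a m x * pd (xi m) k x) * G k l x)
     + (\<Sum>k\<in>UNIV. S a k x * (\<Sum>m\<in>UNIV. xi m x * pd (G k l) m x))
     - (\<Sum>k\<in>UNIV. S a k x * (\<Sum>m\<in>UNIV. G m l x * pd (xi k) m x))
     - (\<Sum>k\<in>UNIV. S a k x * (\<Sum>m\<in>UNIV. G k m x * pd (xi l) m x))"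
    unfolding lie2_def lie20_def by (simp add: ring_distribs sum.distrib sum_subtractf)
  show ?thesis using L R u1 u2 u3 u4 cr by linarith
qed

lemma leib_c:
  fixes M :: "'n::finite \<Rightarrow> 'n \<Rightarrow> 'n \<Rightarrow> 'n sfun"
  assumes dM: "\<And>a c b. M a c b differentiable (at x)" and dX: "\<And>c b. X c b differentiable (at x)"
  shows "lie1 xi (\<lambda>a y. \<Sum>c\<in>UNIV. \<Sum>b\<in>UNIV. M a c b y * X c b y) a x
    = (\<Sum>c\<in>UNIV. \<Sum>b\<in>UNIV. lie3 xi M a c b x * X c b x) + (\<Sum>c\<in>UNIV. \<Sum>b\<in>UNIV. M a c b x * lie20 xi X c b x)"
proof -
  have pdE: "\<And>k. pd (\<lambda>y. \<Sum>c\<in>UNIV. \<Sum>b\<in>UNIV. M a c b y * X c b y) k x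
      = (\<Sum>c\<in>UNIV. \<Sum>b\<in>UNIV. M a c b x * pd (X c b) k x) + (\<Sum>c\<in>UNIV. \<Sum>b\<in>UNIV. pd (M a c b) k x * X c b x)"
    by (simp add: pd_sum pd_mult dM dX sum.distrib)
  have v1: "(\<Sum>k\<in>UNIV. xi k x * (\<Sum>c\<in>UNIV. \<Sum>b\<in>UNIV. M a c b x * pd (X c b) k x))
      = (\<Sum>c\<in>UNIV. \<Sum>b\<in>UNIV. M a c b x * (\<Sum>k\<in>UNIV. xi k x * pd (X c b) k x))"
    by (simp only: sum_distrib_left sum_distrib_right) (subst rot3, simp add: mult_ac)
  have v2: "(\<Sum>k\<in>UNIV. xi k x * (\<Sum>c\<in>UNIV. \<Sum>b\<in>UNIV. pd (M a c b) k x * X c b x))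
      = (\<Sum>c\<in>UNIV. \<Sum>b\<in>UNIV. (\<Sum>k\<in>UNIV. xi k x * pd (M a c b) k x) * X c b x)"
    by (simp only: sum_distrib_left sum_distrib_right) (subst rot3, simp add: mult_ac)
  have v3: "(\<Sum>k\<in>UNIV. (\<Sum>c\<in>UNIV. \<Sum>b\<in>UNIV. M k c b x * X c b x) * pd (xi k) a x)
      = (\<Sum>c\<in>UNIV. \<Sum>b\<in>UNIV. (\<Sum>k\<in>UNIV. M k c b x * pd (xi k) a x) * X c b x)"
    by (simp only: sum_distrib_left sum_distrib_right) (subst rot3, simp add: mult_ac)
  have cr1: "(\<Sum>c\<in>UNIV. \<Sum>b\<in>UNIV. (\<Sum>k\<in>UNIV. M a k b x * pd (xi k) c x) * X c b x)
      = (\<Sum>c\<in>UNIV. \<Sum>b\<in>UNIV. M a c b x * (\<Sum>k\<in>UNIV. X k b x * pd (xi c) k x))"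
    by (simp only: sum_distrib_left sum_distrib_right) (subst swap3, simp add: mult_ac)
  have cr2: "(\<Sum>c\<in>UNIV. \<Sum>b\<in>UNIV. (\<Sum>k\<in>UNIV. M a c k x * pd (xi k) b x) * X c b x)
      = (\<Sum>c\<in>UNIV. \<Sum>b\<in>UNIV. M a c b x * (\<Sum>k\<in>UNIV. X c k x * pd (xi b) k x))"
    by (simp only: sum_distrib_left sum_distrib_right) (subst swap_inner, simp add: mult_ac)
  have L: "lie1 xi (\<lambda>a y. \<Sum>c\<in>UNIV. \<Sum>b\<in>UNIV. M a c b y * X c b y) a x
     = (\<Sum>k\<in>UNIV. xi k x * (\<Sum>c\<in>UNIV. \<Sum>b\<in>UNIV. M a c b x * pd (X c b) k x))
     + (\<Sum>k\<in>UNIV. xi k x * (\<Sum>c\<in>UNIV. \<Sum>b\<in>UNIV. pd (M a c b) k x * X c b x))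
     + (\<Sum>k\<in>UNIV. (\<Sum>c\<in>UNIV. \<Sum>b\<in>UNIV. M k c b x * X c b x) * pd (xi k) a x)"
    unfolding lie1_def pdE by (simp add: ring_distribs sum.distrib)
  have R: "(\<Sum>c\<in>UNIV. \<Sum>b\<in>UNIV. lie3 xi M a c b x * X c b x) + (\<Sum>c\<in>UNIV. \<Sum>b\<in>UNIV. M a c b x * lie20 xi X c b x)
     = (\<Sum>c\<in>UNIV. \<Sum>b\<in>UNIV. (\<Sum>k\<in>UNIV. xi k x * pd (M a c b) k x) * X c b x)
     + (\<Sum>c\<in>UNIV. \<Sum>b\<in>UNIV. (\<Sum>k\<in>UNIV. M k c b x * pd (xi k) a x) * X c b x)
     + (\<Sum>c\<in>UNIV. \<Sum>b\<in>UNIV. (\<Sum>k\<in>UNIV. M a k b x * pd (xi k) c x) * X c b x)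
     + (\<Sum>c\<in>UNIV. \<Sum>b\<in>UNIV. (\<Sum>k\<in>UNIV. M a c k x * pd (xi k) b x) * X c b x)
     + (\<Sum>c\<in>UNIV. \<Sum>b\<in>UNIV. M a c b x * (\<Sum>k\<in>UNIV. xi k x * pd (X c b) k x))
     - (\<Sum>c\<in>UNIV. \<Sum>b\<in>UNIV. M a c b x * (\<Sum>k\<in>UNIV. X k b x * pd (xi c) k x))
     - (\<Sum>c\<in>UNIV. \<Sum>b\<in>UNIV. M a c b x * (\<Sum>k\<in>UNIV. X c k x * pd (xi b) k x))"
    unfolding lie3_def lie20_def by (simp add: ring_distribs sum.distrib sum_subtractf)
  show ?thesis using L R v1 v2 v3 cr1 cr2 by linarith
qed

lemma leib_d:
  fixes G :: "'n::finite \<Rightarrow> 'n \<Rightarrow> 'n sfun"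
  assumes dG: "\<And>c i. G c i differentiable (at x)" and dN: "\<And>i b. N i b differentiable (at x)"
  shows "lie20 xi (\<lambda>c b y. \<Sum>i\<in>UNIV. G c i y * N i b y) c b x
    = (\<Sum>i\<in>UNIV. lie20 xi G c i x * N i b x) + (\<Sum>i\<in>UNIV. G c i x * lie11 xi N i b x)"
proof -
  have pdE: "\<And>k. pd (\<lambda>y. \<Sum>i\<in>UNIV. G c i y * N i b y) k x
      = (\<Sum>i\<in>UNIV. G c i x * pd (N i b) k x) + (\<Sum>i\<in>UNIV. pd (G c i) k x * N i b x)"
    by (simp add: pd_sum pd_mult dG dN sum.distrib)
  have w1: "(\<Sum>k\<in>UNIV. xi k x * (\<Sum>i\<in>UNIV. G c i x * pd (N i b) k x))
      = (\<Sum>i\<in>UNIV. G c i x * (\<Sum>k\<in>UNIV. xi k x * pd (N i b) k x))"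
    by (simp only: sum_distrib_left sum_distrib_right) (subst sum.swap, simp add: mult_ac)
  have w2: "(\<Sum>k\<in>UNIV. xi k x * (\<Sum>i\<in>UNIV. pd (G c i) k x * N i b x))
      = (\<Sum>i\<in>UNIV. (\<Sum>k\<in>UNIV. xi k x * pd (G c i) k x) * N i b x)"
    by (simp only: sum_distrib_left sum_distrib_right) (subst sum.swap, simp add: mult_ac)
  have w3: "(\<Sum>k\<in>UNIV. (\<Sum>i\<in>UNIV. G k i x * N i b x) * pd (xi c) k x)
      = (\<Sum>i\<in>UNIV. (\<Sum>k\<in>UNIV. G k i x * pd (xi c) k x) * N i b x)"
    by (simp only: sum_distrib_left sum_distrib_right) (subst sum.swap, simp add: mult_ac)
  have w4: "(\<Sum>k\<in>UNIV. (\<Sum>i\<in>UNIV. G c i x * N i k x) * pd (xi b) k x)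
      = (\<Sum>i\<in>UNIV. G c i x * (\<Sum>k\<in>UNIV. N i k x * pd (xi b) k x))"
    by (simp only: sum_distrib_left sum_distrib_right) (subst sum.swap, simp add: mult_ac)
  have cr: "(\<Sum>i\<in>UNIV. (\<Sum>k\<in>UNIV. G c k x * pd (xi i) k x) * N i b x)
      = (\<Sum>i\<in>UNIV. G c i x * (\<Sum>k\<in>UNIV. N k b x * pd (xi k) i x))"
    by (simp only: sum_distrib_left sum_distrib_right) (subst sum.swap, simp add: mult_ac)
  have L: "lie20 xi (\<lambda>c b y. \<Sum>i\<in>UNIV. G c i y * N i b y) c b x
     = (\<Sum>k\<in>UNIV. xi k x * (\<Sum>i\<in>UNIV. G c i x * pd (N i b) k x))
     + (\<Sum>k\<in>UNIV. xi k x * (\<Sum>i\<in>UNIV. pd (G c i) k x * N i b x))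
     - (\<Sum>k\<in>UNIV. (\<Sum>i\<in>UNIV. G k i x * N i b x) * pd (xi c) k x)
     - (\<Sum>k\<in>UNIV. (\<Sum>i\<in>UNIV. G c i x * N i k x) * pd (xi b) k x)"
    unfolding lie20_def pdE by (simp add: ring_distribs sum.distrib)
  have R: "(\<Sum>i\<in>UNIV. lie20 xi G c i x * N i b x) + (\<Sum>i\<in>UNIV. G c i x * lie11 xi N i b x)
     = (\<Sum>i\<in>UNIV. (\<Sum>k\<in>UNIV. xi k x * pd (G c i) k x) * N i b x)
     - (\<Sum>i\<in>UNIV. (\<Sum>k\<in>UNIV. G k i x * pd (xi c) k x) * N i b x)
     - (\<Sum>i\<in>UNIV. (\<Sum>k\<in>UNIV. G c k x * pd (xi i) k x) * N i b x)
     + (\<Sum>i\<in>UNIV. G c i x * (\<Sum>k\<in>UNIV. xi k x * pd (N i b) k x))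
     + (\<Sum>i\<in>UNIV. G c i x * (\<Sum>k\<in>UNIV. N k b x * pd (xi k) i x))
     - (\<Sum>i\<in>UNIV. G c i x * (\<Sum>k\<in>UNIV. N i k x * pd (xi b) k x))"
    unfolding lie20_def lie11_def by (simp add: ring_distribs sum.distrib sum_subtractf)
  show ?thesis using L R w1 w2 w3 w4 cr by linarith
qed

lemma leib_e:
  fixes X :: "'n::finite \<Rightarrow> 'n \<Rightarrow> 'n sfun"
  assumes dX: "\<And>a d. X a d differentiable (at x)" and dT: "\<And>d b c. T d b c differentiable (at x)"
  shows "lie12 xi (\<lambda>a b c y. \<Sum>d\<in>UNIV. X a d y * T d b c y) a b c x
    = (\<Sum>d\<in>UNIV. lie20 xi X a d x * T d b c x) + (\<Sum>d\<in>UNIV. X a d x * lie3 xi T d b c x)"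
proof -
  have pdE: "\<And>k. pd (\<lambda>y. \<Sum>d\<in>UNIV. X a d y * T d b c y) k x
      = (\<Sum>d\<in>UNIV. X a d x * pd (T d b c) k x) + (\<Sum>d\<in>UNIV. pd (X a d) k x * T d b c x)"
    by (simp add: pd_sum pd_mult dX dT sum.distrib)
  have y1: "(\<Sum>k\<in>UNIV. xi k x * (\<Sum>d\<in>UNIV. X a d x * pd (T d b c) k x))
      = (\<Sum>d\<in>UNIV. X a d x * (\<Sum>k\<in>UNIV. xi k x * pd (T d b c) k x))"
    by (simp only: sum_distrib_left sum_distrib_right) (subst sum.swap, simp add: mult_ac)
  have y2: "(\<Sum>k\<in>UNIV. xi k x * (\<Sum>d\<in>UNIV. pd (X a d) k x * T d b c x))
      = (\<Sum>d\<in>UNIV. (\<Sum>k\<in>UNIV. xi k x * pd (X a d) k x) * T d b c x)"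
    by (simp only: sum_distrib_left sum_distrib_right) (subst sum.swap, simp add: mult_ac)
  have y3: "(\<Sum>k\<in>UNIV. (\<Sum>d\<in>UNIV. X k d x * T d b c x) * pd (xi a) k x)
      = (\<Sum>d\<in>UNIV. (\<Sum>k\<in>UNIV. X k d x * pd (xi a) k x) * T d b c x)"
    by (simp only: sum_distrib_left sum_distrib_right) (subst sum.swap, simp add: mult_ac)
  have y4: "(\<Sum>k\<in>UNIV. (\<Sum>d\<in>UNIV. X a d x * T d k c x) * pd (xi k) b x)
      = (\<Sum>d\<in>UNIV. X a d x * (\<Sum>k\<in>UNIV. T d k c x * pd (xi k) b x))"
    by (simp only: sum_distrib_left sum_distrib_right) (subst sum.swap, simp add: mult_ac)
  have y5: "(\<Sum>k\<in>UNIV. (\<Sum>d\<in>UNIV. X a d x * T d b k x) * pd (xi k) c x)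
      = (\<Sum>d\<in>UNIV. X a d x * (\<Sum>k\<in>UNIV. T d b k x * pd (xi k) c x))"
    by (simp only: sum_distrib_left sum_distrib_right) (subst sum.swap, simp add: mult_ac)
  have cr: "(\<Sum>d\<in>UNIV. (\<Sum>k\<in>UNIV. X a k x * pd (xi d) k x) * T d b c x)
      = (\<Sum>d\<in>UNIV. X a d x * (\<Sum>k\<in>UNIV. T k b c x * pd (xi k) d x))"
    by (simp only: sum_distrib_left sum_distrib_right) (subst sum.swap, simp add: mult_ac)
  have L: "lie12 xi (\<lambda>a b c y. \<Sum>d\<in>UNIV. X a d y * T d b c y) a b c x
     = (\<Sum>k\<in>UNIV. xi k x * (\<Sum>d\<in>UNIV. X a d x * pd (T d b c) k x))
     + (\<Sum>k\<in>UNIV. xi k x * (\<Sum>d\<in>UNIV. pd (X a d) k x * T d b c x))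
     - (\<Sum>k\<in>UNIV. (\<Sum>d\<in>UNIV. X k d x * T d b c x) * pd (xi a) k x)
     + (\<Sum>k\<in>UNIV. (\<Sum>d\<in>UNIV. X a d x * T d k c x) * pd (xi k) b x)
     + (\<Sum>k\<in>UNIV. (\<Sum>d\<in>UNIV. X a d x * T d b k x) * pd (xi k) c x)"
    unfolding lie12_def pdE by (simp add: ring_distribs sum.distrib)
  have R: "(\<Sum>d\<in>UNIV. lie20 xi X a d x * T d b c x) + (\<Sum>d\<in>UNIV. X a d x * lie3 xi T d b c x)
     = (\<Sum>d\<in>UNIV. (\<Sum>k\<in>UNIV. xi k x * pd (X a d) k x) * T d b c x)
     - (\<Sum>d\<in>UNIV. (\<Sum>k\<in>UNIV. X k d x * pd (xi a) k x) * T d b c x)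
     - (\<Sum>d\<in>UNIV. (\<Sum>k\<in>UNIV. X a k x * pd (xi d) k x) * T d b c x)
     + (\<Sum>d\<in>UNIV. X a d x * (\<Sum>k\<in>UNIV. xi k x * pd (T d b c) k x))
     + (\<Sum>d\<in>UNIV. X a d x * (\<Sum>k\<in>UNIV. T k b c x * pd (xi k) d x))
     + (\<Sum>d\<in>UNIV. X a d x * (\<Sum>k\<in>UNIV. T d k c x * pd (xi k) b x))
     + (\<Sum>d\<in>UNIV. X a d x * (\<Sum>k\<in>UNIV. T d b k x * pd (xi k) c x))"
    unfolding lie20_def lie3_def by (simp add: ring_distribs sum.distrib sum_subtractf)
  show ?thesis using L R y1 y2 y3 y4 y5 cr by linarith
qed

lemma leib_f:
  fixes W :: "'n::finite \<Rightarrow> 'n sfun"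
  assumes dW: "\<And>a. W a differentiable (at x)" and dS: "\<And>b c. S b c differentiable (at x)"
  shows "lie3 xi (\<lambda>a b c y. W a y * S b c y) a b c x = lie1 xi W a x * S b c x + W a x * lie2 xi S b c x"
proof -
  have "lie3 xi (\<lambda>a b c y. W a y * S b c y) a b c x =
     (\<Sum>k\<in>UNIV. xi k x * (W a x * pd (S b c) k x + pd (W a) k x * S b c x))
     + (\<Sum>k\<in>UNIV. W k x * S b c x * pd (xi k) a x) + (\<Sum>k\<in>UNIV. W a x * S k c x * pd (xi k) b x)
     + (\<Sum>k\<in>UNIV. W a x * S b k x * pd (xi k) c x)"
    unfolding lie3_def by (simp add: pd_mult dW dS)
  also have "\<dots> = lie1 xi W a x * S b c x + W a x * lie2 xi S b c x"
    unfolding lie1_def lie2_def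
    by (simp add: ring_distribs sum.distrib sum_distrib_left sum_distrib_right mult_ac)
  finally show ?thesis .
qed

lemma lie3_lin:
  fixes F :: "'n::finite \<Rightarrow> 'n \<Rightarrow> 'n \<Rightarrow> 'n sfun"
  assumes dF: "\<And>a b c. F a b c differentiable (at x)" and dG: "\<And>a b c. G a b c differentiable (at x)"
    and dH: "\<And>a b c. H a b c differentiable (at x)"
  shows "lie3 xi (\<lambda>a b c y. F a b c y + \<alpha> * G a b c y - \<beta> * H a b c y) a b c x
     = lie3 xi F a b c x + \<alpha> * lie3 xi G a b c x - \<beta> * lie3 xi H a b c x"
  unfolding lie3_def using dF dG dH
  by (simp add: pd_add pd_diff pd_cmult ring_distribs sum.distrib sum_subtractf sum_distrib_left mult_ac)

lemma lie1_cong: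
  assumes "open U" "x \<in> U" "\<And>a y. y \<in> U \<Longrightarrow> F a y = F' a y"
  shows "lie1 xi F a x = lie1 xi F' a x"
proof -
  have "\<And>a k. pd (F a) k x = pd (F' a) k x" by (rule pd_local[OF assms(1,2)]) (rule assms(3))
  then show ?thesis unfolding lie1_def using assms(3)[OF assms(2)] by simp
qed

lemma lie2_cong:
  assumes "open U" "x \<in> U" "\<And>a b y. y \<in> U \<Longrightarrow> F a b y = F' a b y"
  shows "lie2 xi F a b x = lie2 xi F' a b x"
proof -
  have "\<And>a b k. pd (F a b) k x = pd (F' a b) k x" by (rule pd_local[OF assms(1,2)]) (rule assms(3))
  then show ?thesis unfolding lie2_def using assms(3)[OF assms(2)] by simp
qed

lemma lie3_cong:
  assumes "open U" "x \<in> U" "\<And>a b c y. y \<in> U \<Longrightarrow> F a b c y = F' a b c y"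
  shows "lie3 xi F a b c x = lie3 xi F' a b c x"
proof -
  have "\<And>a b c k. pd (F a b c) k x = pd (F' a b c) k x" by (rule pd_local[OF assms(1,2)]) (rule assms(3))
  then show ?thesis unfolding lie3_def using assms(3)[OF assms(2)] by simp
qed

lemma lie11_cong:
  assumes "open U" "x \<in> U" "\<And>a b y. y \<in> U \<Longrightarrow> F a b y = F' a b y"
  shows "lie11 xi F a b x = lie11 xi F' a b x"
proof -
  have "\<And>a b k. pd (F a b) k x = pd (F' a b) k x" by (rule pd_local[OF assms(1,2)]) (rule assms(3))
  then show ?thesis unfolding lie11_def using assms(3)[OF assms(2)] by simp
qed

lemma lie20_cong:
  assumes "open U" "x \<in> U" "\<And>a b y. y \<in> U \<Longrightarrow> F a b y = F' a b y"
  shows "lie20 xi F a b x = lie20 xi F' a b x"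
proof -
  have "\<And>a b k. pd (F a b) k x = pd (F' a b) k x" by (rule pd_local[OF assms(1,2)]) (rule assms(3))
  then show ?thesis unfolding lie20_def using assms(3)[OF assms(2)] by simp
qed

lemma lie12_cong:
  assumes "open U" "x \<in> U" "\<And>a b c y. y \<in> U \<Longrightarrow> F a b c y = F' a b c y"
  shows "lie12 xi F a b c x = lie12 xi F' a b c x"
proof -
  have "\<And>a b c k. pd (F a b c) k x = pd (F' a b c) k x" by (rule pd_local[OF assms(1,2)]) (rule assms(3))
  then show ?thesis unfolding lie12_def using assms(3)[OF assms(2)] by simp
qed

definition Km :: "('n::finite \<Rightarrow> 'n \<Rightarrow> 'n sfun) \<Rightarrow> 'n \<Rightarrow> 'n \<Rightarrow> 'n \<Rightarrow> 'n sfun" where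
  "Km S a b c x = pd (S a c) b x + pd (S a b) c x - pd (S b c) a x"

lemma lie3_Km:
  fixes S :: "'n::finite \<Rightarrow> 'n \<Rightarrow> 'n sfun"
  assumes U: "open U" "x \<in> U" and Ssym: "\<And>a b y. y \<in> U \<Longrightarrow> S a b y = S b a y"
    and Ss: "\<And>a b. smooth_on U (S a b)" and xs: "\<And>k. smooth_on U (xi k)"
  shows "lie3 xi (Km S) a b c x = Km (lie2 xi S) a b c x - 2 * (\<Sum>k\<in>UNIV. S a k x * pd (pd (xi k) b) c x)"
proof -
  have dS: "\<And>a b. S a b differentiable (at x)" using Ss smooth_diff U by blast
  have dSi: "\<And>a b i. pd (S a b) i differentiable (at x)" using Ss smooth_diff smooth_pd U by blast
  have dx: "\<And>k. xi k differentiable (at x)" using xs smooth_diff U by blast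
  have dxi: "\<And>k i. pd (xi k) i differentiable (at x)" using xs smooth_diff smooth_pd U by blast
  have schS: "\<And>a b i j. pd (pd (S a b) i) j x = pd (pd (S a b) j) i x"
    by (rule schwarz[OF U]) (auto intro: smooth_diff[OF Ss] dSi)
  have schX: "\<And>k i j. pd (pd (xi k) i) j x = pd (pd (xi k) j) i x"
    by (rule schwarz[OF U]) (auto intro: smooth_diff[OF xs] dxi)
  have symv: "\<And>a b. S a b x = S b a x" using Ssym U by blast
  have symd: "\<And>a b i. pd (S a b) i x = pd (S b a) i x"
    by (rule pd_local[OF U]) (rule Ssym)
  have symdd: "\<And>a b i j. pd (pd (S a b) i) j x = pd (pd (S b a) i) j x"
  proof -
    fix a b i j
    have "\<And>y. y \<in> U \<Longrightarrow> pd (S a b) i y = pd (S b a) i y"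
      by (rule pd_local[OF U(1)]) (auto intro: Ssym)
    then show "pd (pd (S a b) i) j x = pd (pd (S b a) i) j x" by (rule pd_local[OF U])
  qed
  have pdL: "\<And>a c i. pd (lie2 xi S a c) i x =
      (\<Sum>k\<in>UNIV. xi k x * pd (pd (S a c) k) i x + pd (xi k) i x * pd (S a c) k x)
    + (\<Sum>k\<in>UNIV. S k c x * pd (pd (xi k) a) i x + pd (S k c) i x * pd (xi k) a x)
    + (\<Sum>k\<in>UNIV. S a k x * pd (pd (xi k) c) i x + pd (S a k) i x * pd (xi k) c x)"
  proof -
    fix a c i
    have e: "lie2 xi S a c = (\<lambda>y. (\<Sum>k\<in>UNIV. xi k y * pd (S a c) k y) + (\<Sum>k\<in>UNIV. S k c y * pd (xi k) a y)
       + (\<Sum>k\<in>UNIV. S a k y * pd (xi k) c y))" by (simp add: lie2_def fun_eq_iff)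
    show "?thesis a c i" unfolding e
      by (simp add: pd_add pd_sum pd_mult dS dSi dx dxi)
  qed
  have pdK: "\<And>a b c k. pd (Km S a b c) k x = pd (pd (S a c) b) k x + pd (pd (S a b) c) k x - pd (pd (S b c) a) k x"
  proof -
    fix a b c k
    have e: "Km S a b c = (\<lambda>y. pd (S a c) b y + pd (S a b) c y - pd (S b c) a y)" by (simp add: Km_def fun_eq_iff)
    show "?thesis a b c k" unfolding e by (simp add: pd_add pd_diff dSi)
  qed
  show ?thesis
    unfolding lie3_def Km_def[of "lie2 xi S"] pdL pdK
    unfolding Km_def
    apply (simp add: sum.distrib ring_distribs sum_subtractf schS schX symv symd symdd mult.commute)
    done
qed

definition mat2 :: "('n::finite \<Rightarrow> 'n \<Rightarrow> 'n sfun) \<Rightarrow> real^'n \<Rightarrow> real^'n^'n" where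
  "mat2 S x = (\<chi> i j. S i j x)"

definition mixd :: "('n::finite \<Rightarrow> 'n \<Rightarrow> 'n sfun) \<Rightarrow> ('n \<Rightarrow> 'n \<Rightarrow> 'n sfun) \<Rightarrow> 'n \<Rightarrow> 'n \<Rightarrow> 'n sfun" where
  "mixd g S a l x = (\<Sum>k\<in>UNIV. S a k x * ginv g k l x)"

lemma mm2: "(A ** B) $ a $ b = (\<Sum>k\<in>UNIV. A $ a $ k * B $ k $ b)"
  by (simp add: matrix_matrix_mult_def)

lemma mm3: "(A ** B ** C) $ a $ b = (\<Sum>q\<in>UNIV. \<Sum>r\<in>UNIV. A $ a $ q * B $ q $ r * C $ r $ b)"
  by (simp add: matrix_matrix_mult_def sum_distrib_right) (rule sum.swap)

lemma mat2_nth[simp]: "mat2 S x $ i $ j = S i j x"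
  by (simp add: mat2_def)

lemma ifmul_l: "(if P then 1 else 0) * (x::real) = (if P then x else 0)" by simp
lemma ifmul_r: "(x::real) * (if P then 1 else 0) = (if P then x else 0)" by simp

lemma TA: fixes A :: "'a::finite \<Rightarrow> real" and D :: "'b::finite \<Rightarrow> real" and X :: "'c::finite \<Rightarrow> real"
  shows "(\<Sum>m\<in>UNIV. \<Sum>n\<in>UNIV. (A m::real) * (\<Sum>k\<in>UNIV. X k * E k m n) * D n)
   = (\<Sum>k\<in>UNIV. X k * (\<Sum>m\<in>UNIV. \<Sum>n\<in>UNIV. A m * E k m n * D n))"
proof -
  have "(\<Sum>m\<in>UNIV. \<Sum>n\<in>UNIV. (A m::real) * (\<Sum>k\<in>UNIV. X k * E k m n) * D n)
     = (\<Sum>m\<in>UNIV. \<Sum>n\<in>UNIV. \<Sum>k\<in>UNIV. X k * (A m * E k m n * D n))"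
    by (simp add: sum_distrib_left sum_distrib_right mult_ac)
  also have "\<dots> = (\<Sum>k\<in>UNIV. \<Sum>m\<in>UNIV. \<Sum>n\<in>UNIV. X k * (A m * E k m n * D n))"
    by (rule rot3[symmetric])
  also have "\<dots> = (\<Sum>k\<in>UNIV. X k * (\<Sum>m\<in>UNIV. \<Sum>n\<in>UNIV. A m * E k m n * D n))"
    by (simp add: sum_distrib_left)
  finally show ?thesis .
qed

lemma TB: fixes A :: "'a::finite \<Rightarrow> real" and D :: "'b::finite \<Rightarrow> real" and C :: "'a \<Rightarrow> 'c::finite \<Rightarrow> real"
  assumes "\<And>k. (\<Sum>n\<in>UNIV. B k n * D n) = (if k = b then 1 else (0::real))"
  shows "(\<Sum>m\<in>UNIV. \<Sum>n\<in>UNIV. A m * (\<Sum>k\<in>UNIV. B k n * C m k) * D n) = (\<Sum>m\<in>UNIV. A m * C m b)"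
proof (rule sum.cong[OF refl])
  fix m
  have "(\<Sum>n\<in>UNIV. A m * (\<Sum>k\<in>UNIV. B k n * C m k) * D n) = (\<Sum>n\<in>UNIV. \<Sum>k\<in>UNIV. A m * C m k * (B k n * D n))"
    by (simp add: sum_distrib_left sum_distrib_right mult_ac)
  also have "\<dots> = (\<Sum>k\<in>UNIV. \<Sum>n\<in>UNIV. A m * C m k * (B k n * D n))" by (rule sum.swap)
  also have "\<dots> = (\<Sum>k\<in>UNIV. A m * C m k * (if k = b then 1 else 0))"
    by (simp add: assms flip: sum_distrib_left)
  also have "\<dots> = A m * C m b" by (simp only: ifmul_r) (simp add: sum.delta sum.delta' finite_UNIV)
  finally show "(\<Sum>n\<in>UNIV. A m * (\<Sum>k\<in>UNIV. B k n * C m k) * D n) = A m * C m b" .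
qed

lemma TC: fixes A :: "'a::finite \<Rightarrow> real" and D :: "'b::finite \<Rightarrow> real" and B :: "'a \<Rightarrow> 'c::finite \<Rightarrow> real"
  assumes "\<And>k. (\<Sum>m\<in>UNIV. A m * B m k) = (if k = a then 1 else (0::real))"
  shows "(\<Sum>m\<in>UNIV. \<Sum>n\<in>UNIV. A m * (\<Sum>k\<in>UNIV. B m k * C n k) * D n) = (\<Sum>n\<in>UNIV. C n a * D n)"
proof -
  have "(\<Sum>m\<in>UNIV. \<Sum>n\<in>UNIV. A m * (\<Sum>k\<in>UNIV. B m k * C n k) * D n)
     = (\<Sum>m\<in>UNIV. \<Sum>n\<in>UNIV. \<Sum>k\<in>UNIV. (A m * B m k) * (C n k * D n))"
    by (simp add: sum_distrib_left sum_distrib_right mult_ac)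
  also have "\<dots> = (\<Sum>k\<in>UNIV. \<Sum>n\<in>UNIV. \<Sum>m\<in>UNIV. (A m * B m k) * (C n k * D n))"
    by (rule swap3)
  also have "\<dots> = (\<Sum>k\<in>UNIV. \<Sum>n\<in>UNIV. (if k = a then C n k * D n else 0))"
    by (simp add: assms ifmul_l flip: sum_distrib_right)
  also have "\<dots> = (\<Sum>n\<in>UNIV. \<Sum>k\<in>UNIV. (if k = a then C n k * D n else 0))" by (rule sum.swap)
  also have "\<dots> = (\<Sum>n\<in>UNIV. C n a * D n)"
    by (simp add: sum.delta sum.delta' finite_UNIV)
  finally show ?thesis .
qed

locale bc =
  fixes U :: "(real^'n::finite) set" and g P PP :: "'n \<Rightarrow> 'n \<Rightarrow> real^'n \<Rightarrow> real"
    and xi :: "'n \<Rightarrow> real^'n \<Rightarrow> real" and phi chi :: "real^'n \<Rightarrow> real" and p :: nat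
  assumes met: "metric_on U g" and pp: "proj_pair U g P PP"
    and tr: "\<forall>x\<in>U. trace2 g P x = real p" and p1: "1 \<le> p" and p2: "p \<le> CARD('n) - 1"
    and bic: "biconformal U P PP xi phi chi"
begin

lemma Uo: "open U" using met by (simp add: metric_on_def)
lemma gs: "smooth_on U (g i j)" using met by (simp add: metric_on_def)
lemma Ps: "smooth_on U (P i j)" using pp unfolding proj_pair_def by blast
lemma Qs: "smooth_on U (PP i j)" using pp unfolding proj_pair_def by blast
lemma xs: "smooth_on U (xi k)" using bic by (simp add: biconformal_def)
lemma phs: "smooth_on U phi" using bic by (simp add: biconformal_def)
lemma chs: "smooth_on U chi" using bic by (simp add: biconformal_def)

lemma dg: "x \<in> U \<Longrightarrow> g i j differentiable (at x)" using gs smooth_diff by blast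
lemma dP: "x \<in> U \<Longrightarrow> P i j differentiable (at x)" using Ps smooth_diff by blast
lemma dQ: "x \<in> U \<Longrightarrow> PP i j differentiable (at x)" using Qs smooth_diff by blast
lemma dxi: "x \<in> U \<Longrightarrow> xi k differentiable (at x)" using xs smooth_diff by blast
lemma dph: "x \<in> U \<Longrightarrow> phi differentiable (at x)" using phs smooth_diff by blast
lemma dch: "x \<in> U \<Longrightarrow> chi differentiable (at x)" using chs smooth_diff by blast
lemma dgd: "x \<in> U \<Longrightarrow> pd (g i j) k differentiable (at x)" using gs smooth_diff smooth_pd by blast
lemma dPd: "x \<in> U \<Longrightarrow> pd (P i j) k differentiable (at x)" using Ps smooth_diff smooth_pd by blast
lemma dQd: "x \<in> U \<Longrightarrow> pd (PP i j) k differentiable (at x)" using Qs smooth_diff smooth_pd by blast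
lemma dxid: "x \<in> U \<Longrightarrow> pd (xi i) k differentiable (at x)" using xs smooth_diff smooth_pd by blast
lemma dgi: "x \<in> U \<Longrightarrow> ginv g i j differentiable (at x)" using ginv_differentiable[OF met] by blast

lemma Psym: "y \<in> U \<Longrightarrow> P a b y = P b a y" using pp unfolding proj_pair_def by blast
lemma Qsym: "y \<in> U \<Longrightarrow> PP a b y = PP b a y" using pp unfolding proj_pair_def by blast
lemma gsym: "y \<in> U \<Longrightarrow> g a b y = g b a y" using met by (simp add: metric_on_def)
lemma gsum: "y \<in> U \<Longrightarrow> P a b y + PP a b y = g a b y" using pp unfolding proj_pair_def by blast
lemma pPP: "y \<in> U \<Longrightarrow> (\<Sum>q\<in>UNIV. \<Sum>r\<in>UNIV. P a q y * ginv g q r y * P r b y) = P a b y"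
  using pp unfolding proj_pair_def by blast
lemma pQQ: "y \<in> U \<Longrightarrow> (\<Sum>q\<in>UNIV. \<Sum>r\<in>UNIV. PP a q y * ginv g q r y * PP r b y) = PP a b y"
  using pp unfolding proj_pair_def by blast
lemma pPQ: "y \<in> U \<Longrightarrow> (\<Sum>q\<in>UNIV. \<Sum>r\<in>UNIV. P a q y * ginv g q r y * PP r b y) = 0"
  using pp unfolding proj_pair_def by blast
lemma lieP: "y \<in> U \<Longrightarrow> lie2 xi P a b y = phi y * P a b y" using bic by (simp add: biconformal_def)
lemma lieQ: "y \<in> U \<Longrightarrow> lie2 xi PP a b y = chi y * PP a b y" using bic by (simp add: biconformal_def)

abbreviation IM where "IM x \<equiv> matrix_inv (mat2 g x)"

lemma gmat_mat2: "gmat g x = mat2 g x" by (simp add: gmat_def mat2_def)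
lemma IM_nth: "IM x $ i $ j = ginv g i j x" by (simp add: ginv_def gmat_mat2)

lemma mIG: "x \<in> U \<Longrightarrow> IM x ** mat2 g x = mat 1" using metric_inv[OF met] by (simp add: gmat_mat2)
lemma mGI: "x \<in> U \<Longrightarrow> mat2 g x ** IM x = mat 1" using metric_inv[OF met] by (simp add: gmat_mat2)
lemma tIM: "x \<in> U \<Longrightarrow> transpose (IM x) = IM x"
  by (simp add: vec_eq_iff transpose_def IM_nth ginv_sym[OF met])
lemma tP: "x \<in> U \<Longrightarrow> transpose (mat2 P x) = mat2 P x" by (simp add: vec_eq_iff transpose_def Psym)
lemma tQ: "x \<in> U \<Longrightarrow> transpose (mat2 PP x) = mat2 PP x" by (simp add: vec_eq_iff transpose_def Qsym)
lemma mPQsum: "x \<in> U \<Longrightarrow> mat2 P x + mat2 PP x = mat2 g x" by (simp add: vec_eq_iff gsum)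
lemma mPP: "x \<in> U \<Longrightarrow> mat2 P x ** IM x ** mat2 P x = mat2 P x"
  by (simp add: vec_eq_iff mm3 IM_nth pPP)
lemma mQQ: "x \<in> U \<Longrightarrow> mat2 PP x ** IM x ** mat2 PP x = mat2 PP x"
  by (simp add: vec_eq_iff mm3 IM_nth pQQ)
lemma mPQ: "x \<in> U \<Longrightarrow> mat2 P x ** IM x ** mat2 PP x = 0"
  by (simp add: vec_eq_iff mm3 IM_nth pPQ)
lemma mQP: "x \<in> U \<Longrightarrow> mat2 PP x ** IM x ** mat2 P x = 0"
proof -
  assume x: "x \<in> U"
  have "transpose (mat2 P x ** IM x ** mat2 PP x) = mat2 PP x ** IM x ** mat2 P x"
    by (simp add: matrix_transpose_mul tP tQ tIM x matrix_mul_assoc)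
  then show ?thesis using mPQ[OF x] by (simp add: transpose_def vec_eq_iff)
qed

lemma mixd_mat: "mixd g S a l x = (mat2 S x ** IM x) $ a $ l"
  by (simp add: mixd_def mm2 IM_nth)
lemma up2_mat: "x \<in> U \<Longrightarrow> up2 g S a b x = (IM x ** mat2 S x ** IM x) $ a $ b"
  unfolding up2_def mm3 IM_nth using ginv_sym[OF met]
  by (simp add: mult_ac)

lemma lie2g: assumes x: "x \<in> U" shows "lie2 xi g a b x = phi x * P a b x + chi x * PP a b x"
proof -
  have "lie2 xi g a b x = lie2 xi (\<lambda>a b y. P a b y + PP a b y) a b x"
    by (rule lie2_cong[OF Uo x]) (simp add: gsum)
  also have "\<dots> = lie2 xi P a b x + lie2 xi PP a b x"
    unfolding lie2_def using x by (simp add: pd_add dP dQ ring_distribs sum.distrib)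
  finally show ?thesis using x by (simp add: lieP lieQ)
qed

lemma lie20_ginv: assumes x: "x \<in> U"
  shows "lie20 xi (ginv g) a b x = - (phi x * up2 g P a b x + chi x * up2 g PP a b x)"
proof -
  have A: "(\<Sum>m\<in>UNIV. \<Sum>n\<in>UNIV. ginv g a m x * (\<Sum>k\<in>UNIV. xi k x * pd (g m n) k x) * ginv g n b x)
     = (\<Sum>k\<in>UNIV. xi k x * (\<Sum>m\<in>UNIV. \<Sum>n\<in>UNIV. ginv g a m x * pd (g m n) k x * ginv g n b x))"
    by (rule TA)
  have B: "(\<Sum>m\<in>UNIV. \<Sum>n\<in>UNIV. ginv g a m x * (\<Sum>k\<in>UNIV. g k n x * pd (xi k) m x) * ginv g n b x)
     = (\<Sum>m\<in>UNIV. ginv g a m x * pd (xi b) m x)"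
    by (rule TB) (simp add: ginv_right[OF met x])
  have C: "(\<Sum>m\<in>UNIV. \<Sum>n\<in>UNIV. ginv g a m x * (\<Sum>k\<in>UNIV. g m k x * pd (xi k) n x) * ginv g n b x)
     = (\<Sum>n\<in>UNIV. pd (xi a) n x * ginv g n b x)"
    by (rule TC) (simp add: ginv_left[OF met x])
  have "(\<Sum>m\<in>UNIV. \<Sum>n\<in>UNIV. ginv g a m x * lie2 xi g m n x * ginv g n b x)
     = (\<Sum>m\<in>UNIV. \<Sum>n\<in>UNIV. ginv g a m x * (\<Sum>k\<in>UNIV. xi k x * pd (g m n) k x) * ginv g n b x)
     + (\<Sum>m\<in>UNIV. \<Sum>n\<in>UNIV. ginv g a m x * (\<Sum>k\<in>UNIV. g k n x * pd (xi k) m x) * ginv g n b x)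
     + (\<Sum>m\<in>UNIV. \<Sum>n\<in>UNIV. ginv g a m x * (\<Sum>k\<in>UNIV. g m k x * pd (xi k) n x) * ginv g n b x)"
    unfolding lie2_def by (simp add: ring_distribs sum.distrib)
  also have "\<dots> = - lie20 xi (ginv g) a b x"
    unfolding A B C lie20_def using x
    by (simp add: pd_ginv[OF met x] sum_distrib_left sum_negf mult_ac)
  finally have E: "lie20 xi (ginv g) a b x = - (\<Sum>m\<in>UNIV. \<Sum>n\<in>UNIV. ginv g a m x * lie2 xi g m n x * ginv g n b x)"
    by simp
  show ?thesis unfolding E up2_def using x
    by (simp add: lie2g ring_distribs sum.distrib sum_distrib_left ginv_sym[OF met x, of b] mult_ac)
qed

lemma mr1: "x \<in> U \<Longrightarrow> mat2 P x ** (IM x ** mat2 P x) = mat2 P x"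
  using mPP by (simp add: matrix_mul_assoc)
lemma mr2: "x \<in> U \<Longrightarrow> mat2 PP x ** (IM x ** mat2 PP x) = mat2 PP x"
  using mQQ by (simp add: matrix_mul_assoc)
lemma mr3: "x \<in> U \<Longrightarrow> mat2 P x ** (IM x ** mat2 PP x) = 0"
  using mPQ by (simp add: matrix_mul_assoc)
lemma mr4: "x \<in> U \<Longrightarrow> mat2 PP x ** (IM x ** mat2 P x) = 0"
  using mQP by (simp add: matrix_mul_assoc)
lemma mr1': "x \<in> U \<Longrightarrow> mat2 P x ** (IM x ** (mat2 P x ** X)) = mat2 P x ** X"
  by (metis matrix_mul_assoc mr1)
lemma mr2': "x \<in> U \<Longrightarrow> mat2 PP x ** (IM x ** (mat2 PP x ** X)) = mat2 PP x ** X"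
  by (metis matrix_mul_assoc mr2)
lemma mr3': "x \<in> U \<Longrightarrow> mat2 P x ** (IM x ** (mat2 PP x ** X)) = 0"
  by (metis matrix_mul_assoc mr3 times0_left)
lemma mr4': "x \<in> U \<Longrightarrow> mat2 PP x ** (IM x ** (mat2 P x ** X)) = 0"
  by (metis matrix_mul_assoc mr4 times0_left)
lemmas mrs = mr1 mr2 mr3 mr4 mr1' mr2' mr3' mr4'

lemma cv1: "(\<Sum>l\<in>UNIV. mixd g S a l x * T l b x) = ((mat2 S x ** IM x) ** mat2 T x) $ a $ b"
  by (simp add: mixd_mat mm2)
lemma cv2: "(\<Sum>l\<in>UNIV. mixd g S a l x * mixd g T l b x) = ((mat2 S x ** IM x) ** (mat2 T x ** IM x)) $ a $ b"
  by (simp add: mixd_mat mm2)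
lemma cv3: "x \<in> U \<Longrightarrow> (\<Sum>k\<in>UNIV. S a k x * up2 g T k l x) = (mat2 S x ** (IM x ** mat2 T x ** IM x)) $ a $ l"
  by (simp add: up2_mat mm2)
lemma cv4: "x \<in> U \<Longrightarrow> (\<Sum>i\<in>UNIV. up2 g S c i x * mixd g T i b x) = ((IM x ** mat2 S x ** IM x) ** (mat2 T x ** IM x)) $ c $ b"
  by (simp add: up2_mat mixd_mat mm2)
lemma cv5: "mixd g S a l x = (mat2 S x ** IM x) $ a $ l" by (rule mixd_mat)
lemma cv6: "x \<in> U \<Longrightarrow> up2 g S a b x = (IM x ** mat2 S x ** IM x) $ a $ b"
  by (rule up2_mat)
lemmas massoc = matrix_mul_assoc[symmetric]

lemma cPuP: "x \<in> U \<Longrightarrow> (\<Sum>k\<in>UNIV. P a k x * up2 g P k l x) = mixd g P a l x"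
  by (simp add: cv3 cv5 massoc mrs)
lemma cPuQ: "x \<in> U \<Longrightarrow> (\<Sum>k\<in>UNIV. P a k x * up2 g PP k l x) = 0"
  by (simp add: cv3 massoc mrs)
lemma cQuQ: "x \<in> U \<Longrightarrow> (\<Sum>k\<in>UNIV. PP a k x * up2 g PP k l x) = mixd g PP a l x"
  by (simp add: cv3 cv5 massoc mrs)
lemma cQuP: "x \<in> U \<Longrightarrow> (\<Sum>k\<in>UNIV. PP a k x * up2 g P k l x) = 0"
  by (simp add: cv3 massoc mrs)

lemma mixd_fun: "mixd g S a l = (\<lambda>y. \<Sum>k\<in>UNIV. S a k y * ginv g k l y)"
  by (simp add: fun_eq_iff mixd_def)
lemma mixd_fun2: "mixd g S = (\<lambda>a l y. \<Sum>k\<in>UNIV. S a k y * ginv g k l y)"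
  by (simp add: fun_eq_iff mixd_def)

lemma dmixP: "x \<in> U \<Longrightarrow> mixd g P a l differentiable (at x)"
  unfolding mixd_fun by (auto intro!: differentiable_sum differentiable_mult dP dgi)
lemma dmixQ: "x \<in> U \<Longrightarrow> mixd g PP a l differentiable (at x)"
  unfolding mixd_fun by (auto intro!: differentiable_sum differentiable_mult dQ dgi)

lemma lie11_mixP: assumes x: "x \<in> U" shows "lie11 xi (mixd g P) a l x = 0"
proof -
  have "lie11 xi (mixd g P) a l x = (\<Sum>k\<in>UNIV. lie2 xi P a k x * ginv g k l x) + (\<Sum>k\<in>UNIV. P a k x * lie20 xi (ginv g) k l x)"
    unfolding mixd_fun2 by (rule leib_b) (auto intro: dP dgi x)
  also have "\<dots> = phi x * mixd g P a l x - phi x * (\<Sum>k\<in>UNIV. P a k x * up2 g P k l x) - chi x * (\<Sum>k\<in>UNIV. P a k x * up2 g PP k l x)"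
    using x by (simp add: lieP lie20_ginv mixd_def sum_distrib_left ring_distribs sum.distrib sum_subtractf sum_negf mult_ac)
  also have "\<dots> = 0" using x by (simp add: cPuP cPuQ)
  finally show ?thesis .
qed

lemma lie11_mixQ: assumes x: "x \<in> U" shows "lie11 xi (mixd g PP) a l x = 0"
proof -
  have "lie11 xi (mixd g PP) a l x = (\<Sum>k\<in>UNIV. lie2 xi PP a k x * ginv g k l x) + (\<Sum>k\<in>UNIV. PP a k x * lie20 xi (ginv g) k l x)"
    unfolding mixd_fun2 by (rule leib_b) (auto intro: dQ dgi x)
  also have "\<dots> = chi x * mixd g PP a l x - phi x * (\<Sum>k\<in>UNIV. PP a k x * up2 g P k l x) - chi x * (\<Sum>k\<in>UNIV. PP a k x * up2 g PP k l x)"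
    using x by (simp add: lieQ lie20_ginv mixd_def sum_distrib_left ring_distribs sum.distrib sum_subtractf sum_negf mult_ac)
  also have "\<dots> = 0" using x by (simp add: cQuQ cQuP)
  finally show ?thesis .
qed

lemma up2_split: "x \<in> U \<Longrightarrow> up2 g S c b x = (\<Sum>i\<in>UNIV. ginv g c i x * mixd g S i b x)"
  by (simp add: cv6 mixd_mat mm2 IM_nth massoc)

lemma lie20_up2P: assumes x: "x \<in> U" shows "lie20 xi (up2 g P) c b x = - phi x * up2 g P c b x"
proof -
  have "lie20 xi (up2 g P) c b x = lie20 xi (\<lambda>c b y. \<Sum>i\<in>UNIV. ginv g c i y * mixd g P i b y) c b x"
    by (rule lie20_cong[OF Uo x]) (simp add: up2_split)
  also have "\<dots> = (\<Sum>i\<in>UNIV. lie20 xi (ginv g) c i x * mixd g P i b x) + (\<Sum>i\<in>UNIV. ginv g c i x * lie11 xi (mixd g P) i b x)"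
    by (rule leib_d) (auto intro: dmixP dgi x)
  also have "\<dots> = - phi x * (\<Sum>i\<in>UNIV. up2 g P c i x * mixd g P i b x) - chi x * (\<Sum>i\<in>UNIV. up2 g PP c i x * mixd g P i b x)"
    using x by (simp add: lie11_mixP lie20_ginv sum_distrib_left ring_distribs sum.distrib sum_subtractf sum_negf mult_ac)
  also have "\<dots> = - phi x * up2 g P c b x" using x by (simp add: cv4[OF x]) (simp add: cv6 massoc mrs)
  finally show ?thesis .
qed

lemma lie20_up2Q: assumes x: "x \<in> U" shows "lie20 xi (up2 g PP) c b x = - chi x * up2 g PP c b x"
proof -
  have "lie20 xi (up2 g PP) c b x = lie20 xi (\<lambda>c b y. \<Sum>i\<in>UNIV. ginv g c i y * mixd g PP i b y) c b x"
    by (rule lie20_cong[OF Uo x]) (simp add: up2_split)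
  also have "\<dots> = (\<Sum>i\<in>UNIV. lie20 xi (ginv g) c i x * mixd g PP i b x) + (\<Sum>i\<in>UNIV. ginv g c i x * lie11 xi (mixd g PP) i b x)"
    by (rule leib_d) (auto intro: dmixQ dgi x)
  also have "\<dots> = - phi x * (\<Sum>i\<in>UNIV. up2 g P c i x * mixd g PP i b x) - chi x * (\<Sum>i\<in>UNIV. up2 g PP c i x * mixd g PP i b x)"
    using x by (simp add: lie11_mixQ lie20_ginv sum_distrib_left ring_distribs sum.distrib sum_subtractf sum_negf mult_ac)
  also have "\<dots> = - chi x * up2 g PP c b x" using x by (simp add: cv4[OF x]) (simp add: cv6 massoc mrs)
  finally show ?thesis .
qed

end

lemma contr2: fixes A :: "'a::finite \<Rightarrow> real" and C :: "'b::finite \<Rightarrow> real"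
  shows "(\<Sum>r\<in>UNIV. A r * (\<Sum>l\<in>UNIV. B r l * C l)) = (\<Sum>l\<in>UNIV. (\<Sum>r\<in>UNIV. A r * B r l) * C l)"
  by (simp add: sum_distrib_left sum_distrib_right mult_ac) (rule sum.swap)

lemma lie3_diff:
  fixes F :: "'n::finite \<Rightarrow> 'n \<Rightarrow> 'n \<Rightarrow> 'n sfun"
  assumes dF: "\<And>a b c. F a b c differentiable (at x)" and dG: "\<And>a b c. G a b c differentiable (at x)"
  shows "lie3 xi (\<lambda>a b c y. F a b c y - G a b c y) a b c x = lie3 xi F a b c x - lie3 xi G a b c x"
  unfolding lie3_def using dF dG
  by (simp add: pd_diff ring_distribs sum.distrib sum_subtractf)

context bc begin

lemma chsym: "x \<in> U \<Longrightarrow> christoffel g k i j x = christoffel g k j i x"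
proof -
  assume x: "x \<in> U"
  have "\<And>l. pd (g i j) l x = pd (g j i) l x" by (rule pd_local[OF Uo x]) (rule gsym)
  then show ?thesis unfolding christoffel_def by (simp add: add.commute)
qed

lemma Kmg: "x \<in> U \<Longrightarrow> Km g l b c x = Km P l b c x + Km PP l b c x"
proof -
  assume x: "x \<in> U"
  have "\<And>i j k. pd (g i j) k x = pd (\<lambda>y. P i j y + PP i j y) k x"
    by (rule pd_local[OF Uo x]) (simp add: gsum)
  then show ?thesis unfolding Km_def using x by (simp add: pd_add dP dQ)
qed

lemma chK: "x \<in> U \<Longrightarrow> christoffel g k b c x = 1/2 * (\<Sum>l\<in>UNIV. ginv g k l x * Km g l b c x)"
proof -
  assume x: "x \<in> U"
  have "\<And>i j k. pd (g i j) k x = pd (g j i) k x" by (rule pd_local[OF Uo x]) (rule gsym)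
  then show ?thesis unfolding christoffel_def Km_def by simp
qed

lemma mixsum: "x \<in> U \<Longrightarrow> mixd g P a l x + mixd g PP a l x = (if a = l then 1 else 0)"
proof -
  assume x: "x \<in> U"
  have "mixd g P a l x + mixd g PP a l x = ((mat2 P x + mat2 PP x) ** IM x) $ a $ l"
    by (simp add: mixd_mat mm2 ring_distribs sum.distrib)
  also have "\<dots> = (if a = l then 1 else 0)" using x by (simp add: mPQsum mGI mat_def)
  finally show ?thesis .
qed

lemma Mt_form: assumes x: "x \<in> U"
  shows "Mt g P a b c x = (\<Sum>l\<in>UNIV. mixd g PP a l x * Km P l b c x) - (\<Sum>l\<in>UNIV. mixd g P a l x * Km PP l b c x)"
proof -
  have 1: "Mt g P a b c x = Km P a b c x - 2 * (\<Sum>k\<in>UNIV. christoffel g k b c x * P a k x)"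
  proof -
    have e1: "(\<Sum>k\<in>UNIV. christoffel g k b a x * P k c x) = (\<Sum>k\<in>UNIV. christoffel g k a b x * P k c x)"
      using x by (simp add: chsym[of x k b a for k])
    have e2: "(\<Sum>k\<in>UNIV. christoffel g k c a x * P k b x) = (\<Sum>k\<in>UNIV. christoffel g k a c x * P b k x)"
      using x by (simp add: chsym[of x k c a for k] Psym[of x _ b])
    have e3: "(\<Sum>k\<in>UNIV. christoffel g k c b x * P a k x) = (\<Sum>k\<in>UNIV. christoffel g k b c x * P a k x)"
      using x by (simp add: chsym[of x k c b for k])
    show ?thesis unfolding Mt_def nabla2_def Km_def using e1 e2 e3 by linarith
  qed
  have 2: "2 * (\<Sum>k\<in>UNIV. christoffel g k b c x * P a k x) = (\<Sum>l\<in>UNIV. mixd g P a l x * Km g l b c x)"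
  proof -
    have "2 * (\<Sum>k\<in>UNIV. christoffel g k b c x * P a k x) = (\<Sum>k\<in>UNIV. P a k x * (\<Sum>l\<in>UNIV. ginv g k l x * Km g l b c x))"
      using x by (simp add: chK sum_distrib_left mult_ac)
    also have "\<dots> = (\<Sum>l\<in>UNIV. mixd g P a l x * Km g l b c x)"
      by (simp add: contr2 mixd_def)
    finally show ?thesis .
  qed
  have 4: "Km P a b c x = (\<Sum>l\<in>UNIV. (mixd g P a l x + mixd g PP a l x) * Km P l b c x)"
    using x by (simp add: mixsum ifmul_l)
  show ?thesis unfolding 1 2 4 using x
    by (simp add: Kmg ring_distribs sum.distrib sum_subtractf)
qed

lemma Km_fun: "Km S l b c = (\<lambda>y. pd (S l c) b y + pd (S l b) c y - pd (S b c) l y)"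
  by (simp add: fun_eq_iff Km_def)
lemma dKmP: "x \<in> U \<Longrightarrow> Km P l b c differentiable (at x)"
  unfolding Km_fun by (auto intro!: differentiable_add differentiable_diff dPd)
lemma dKmQ: "x \<in> U \<Longrightarrow> Km PP l b c differentiable (at x)"
  unfolding Km_fun by (auto intro!: differentiable_add differentiable_diff dQd)

lemma Km_lieP: assumes x: "x \<in> U"
  shows "Km (lie2 xi P) l b c x = phi x * Km P l b c x + pd phi b x * P l c x + pd phi c x * P l b x - pd phi l x * P b c x"
proof -
  have "\<And>i j k. pd (lie2 xi P i j) k x = pd (\<lambda>y. phi y * P i j y) k x"
    by (rule pd_local[OF Uo x]) (simp add: lieP)
  then show ?thesis unfolding Km_def using x by (simp add: pd_mult dph dP ring_distribs)
qed

lemma Km_lieQ: assumes x: "x \<in> U"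
  shows "Km (lie2 xi PP) l b c x = chi x * Km PP l b c x + pd chi b x * PP l c x + pd chi c x * PP l b x - pd chi l x * PP b c x"
proof -
  have "\<And>i j k. pd (lie2 xi PP i j) k x = pd (\<lambda>y. chi y * PP i j y) k x"
    by (rule pd_local[OF Uo x]) (simp add: lieQ)
  then show ?thesis unfolding Km_def using x by (simp add: pd_mult dch dQ ring_distribs)
qed

lemma lie3KmP: "x \<in> U \<Longrightarrow> lie3 xi (Km P) l b c x = Km (lie2 xi P) l b c x - 2 * (\<Sum>k\<in>UNIV. P l k x * pd (pd (xi k) b) c x)"
  by (rule lie3_Km[OF Uo]) (auto intro: Psym Ps xs)
lemma lie3KmQ: "x \<in> U \<Longrightarrow> lie3 xi (Km PP) l b c x = Km (lie2 xi PP) l b c x - 2 * (\<Sum>k\<in>UNIV. PP l k x * pd (pd (xi k) b) c x)"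
  by (rule lie3_Km[OF Uo]) (auto intro: Qsym Qs xs)

lemma cQP0: "x \<in> U \<Longrightarrow> (\<Sum>l\<in>UNIV. mixd g PP a l x * P l k x) = 0"
  by (simp add: cv1 massoc mrs)
lemma cPQ0: "x \<in> U \<Longrightarrow> (\<Sum>l\<in>UNIV. mixd g P a l x * PP l k x) = 0"
  by (simp add: cv1 massoc mrs)
lemma cPP1: "x \<in> U \<Longrightarrow> (\<Sum>l\<in>UNIV. mixd g P a l x * P l k x) = P a k x"
  by (simp add: cv1 massoc mrs)
lemma cQQ1: "x \<in> U \<Longrightarrow> (\<Sum>l\<in>UNIV. mixd g PP a l x * PP l k x) = PP a k x"
  by (simp add: cv1 massoc mrs)
lemma cmQQ: "x \<in> U \<Longrightarrow> (\<Sum>l\<in>UNIV. mixd g PP a l x * mixd g PP l k x) = mixd g PP a k x"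
  by (simp only: cv2) (simp add: cv5 massoc mrs)
lemma cmPP: "x \<in> U \<Longrightarrow> (\<Sum>l\<in>UNIV. mixd g P a l x * mixd g P l k x) = mixd g P a k x"
  by (simp only: cv2) (simp add: cv5 massoc mrs)
lemma cmQP: "x \<in> U \<Longrightarrow> (\<Sum>l\<in>UNIV. mixd g PP a l x * mixd g P l k x) = 0"
  by (simp add: cv2 massoc mrs)
lemma cmPQ: "x \<in> U \<Longrightarrow> (\<Sum>l\<in>UNIV. mixd g P a l x * mixd g PP l k x) = 0"
  by (simp add: cv2 massoc mrs)

lemma gradsum: "(\<Sum>l\<in>UNIV. mixd g S a l x * pd f l x) = (\<Sum>q\<in>UNIV. S a q x * grad g f q x)"
  unfolding mixd_def grad_def by (rule contr2[symmetric])

lemma sumQ_lie3KmP: assumes x: "x \<in> U"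
  shows "(\<Sum>l\<in>UNIV. mixd g PP a l x * lie3 xi (Km P) l b c x)
    = phi x * (\<Sum>l\<in>UNIV. mixd g PP a l x * Km P l b c x) - (\<Sum>q\<in>UNIV. PP a q x * grad g phi q x) * P b c x"
proof -
  have z: "(\<Sum>l\<in>UNIV. mixd g PP a l x * (\<Sum>k\<in>UNIV. P l k x * pd (pd (xi k) b) c x)) = 0"
    using x by (simp add: contr2 cQP0)
  have "(\<Sum>l\<in>UNIV. mixd g PP a l x * lie3 xi (Km P) l b c x)
    = phi x * (\<Sum>l\<in>UNIV. mixd g PP a l x * Km P l b c x) + pd phi b x * (\<Sum>l\<in>UNIV. mixd g PP a l x * P l c x)
      + pd phi c x * (\<Sum>l\<in>UNIV. mixd g PP a l x * P l b x) - (\<Sum>l\<in>UNIV. mixd g PP a l x * pd phi l x) * P b c x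
      - 2 * (\<Sum>l\<in>UNIV. mixd g PP a l x * (\<Sum>k\<in>UNIV. P l k x * pd (pd (xi k) b) c x))"
    using x by (simp add: lie3KmP Km_lieP ring_distribs sum.distrib sum_subtractf sum_distrib_left sum_distrib_right mult_ac)
  then show ?thesis using x by (simp add: z cQP0 gradsum)
qed

lemma sumP_lie3KmQ: assumes x: "x \<in> U"
  shows "(\<Sum>l\<in>UNIV. mixd g P a l x * lie3 xi (Km PP) l b c x)
    = chi x * (\<Sum>l\<in>UNIV. mixd g P a l x * Km PP l b c x) - (\<Sum>q\<in>UNIV. P a q x * grad g chi q x) * PP b c x"
proof -
  have z: "(\<Sum>l\<in>UNIV. mixd g P a l x * (\<Sum>k\<in>UNIV. PP l k x * pd (pd (xi k) b) c x)) = 0"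
    using x by (simp add: contr2 cPQ0)
  have "(\<Sum>l\<in>UNIV. mixd g P a l x * lie3 xi (Km PP) l b c x)
    = chi x * (\<Sum>l\<in>UNIV. mixd g P a l x * Km PP l b c x) + pd chi b x * (\<Sum>l\<in>UNIV. mixd g P a l x * PP l c x)
      + pd chi c x * (\<Sum>l\<in>UNIV. mixd g P a l x * PP l b x) - (\<Sum>l\<in>UNIV. mixd g P a l x * pd chi l x) * PP b c x
      - 2 * (\<Sum>l\<in>UNIV. mixd g P a l x * (\<Sum>k\<in>UNIV. PP l k x * pd (pd (xi k) b) c x))"
    using x by (simp add: lie3KmQ Km_lieQ ring_distribs sum.distrib sum_subtractf sum_distrib_left sum_distrib_right mult_ac)
  then show ?thesis using x by (simp add: z cPQ0 gradsum)
qed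

lemma LM: assumes x: "x \<in> U"
  shows "lie3 xi (Mt g P) a b c x = phi x * (\<Sum>r\<in>UNIV. mixd g PP a r x * Mt g P r b c x)
     + chi x * (\<Sum>r\<in>UNIV. mixd g P a r x * Mt g P r b c x)
     - (\<Sum>q\<in>UNIV. PP a q x * grad g phi q x) * P b c x + (\<Sum>q\<in>UNIV. P a q x * grad g chi q x) * PP b c x"
proof -
  have "lie3 xi (Mt g P) a b c x = lie3 xi (\<lambda>a b c y. (\<Sum>l\<in>UNIV. mixd g PP a l y * Km P l b c y)
       - (\<Sum>l\<in>UNIV. mixd g P a l y * Km PP l b c y)) a b c x"
    by (rule lie3_cong[OF Uo x]) (simp add: Mt_form)
  also have "\<dots> = lie3 xi (\<lambda>a b c y. \<Sum>l\<in>UNIV. mixd g PP a l y * Km P l b c y) a b c x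
       - lie3 xi (\<lambda>a b c y. \<Sum>l\<in>UNIV. mixd g P a l y * Km PP l b c y) a b c x"
    by (rule lie3_diff) (auto intro!: differentiable_sum differentiable_mult dmixP dmixQ dKmP dKmQ x)
  also have "\<dots> = (\<Sum>l\<in>UNIV. lie11 xi (mixd g PP) a l x * Km P l b c x) + (\<Sum>l\<in>UNIV. mixd g PP a l x * lie3 xi (Km P) l b c x)
     - ((\<Sum>l\<in>UNIV. lie11 xi (mixd g P) a l x * Km PP l b c x) + (\<Sum>l\<in>UNIV. mixd g P a l x * lie3 xi (Km PP) l b c x))"
    by (subst leib_a, auto intro: dmixP dmixQ dKmP dKmQ x)+
  also have "\<dots> = phi x * (\<Sum>l\<in>UNIV. mixd g PP a l x * Km P l b c x) - (\<Sum>q\<in>UNIV. PP a q x * grad g phi q x) * P b c x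
     - (chi x * (\<Sum>l\<in>UNIV. mixd g P a l x * Km PP l b c x) - (\<Sum>q\<in>UNIV. P a q x * grad g chi q x) * PP b c x)"
    using x by (simp add: lie11_mixP lie11_mixQ sumQ_lie3KmP sumP_lie3KmQ)
  moreover have "(\<Sum>r\<in>UNIV. mixd g PP a r x * Mt g P r b c x) = (\<Sum>l\<in>UNIV. mixd g PP a l x * Km P l b c x)"
    using x by (simp add: Mt_form right_diff_distrib sum_subtractf contr2 cmQQ cmQP)
  moreover have "(\<Sum>r\<in>UNIV. mixd g P a r x * Mt g P r b c x) = - (\<Sum>l\<in>UNIV. mixd g P a l x * Km PP l b c x)"
    using x by (simp add: Mt_form right_diff_distrib sum_subtractf contr2 cmPQ cmPP)
  ultimately show ?thesis by simp
qed

end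

lemma pd_trip:
  fixes A :: "'q::finite \<Rightarrow> 'n::finite sfun" and C :: "'r::finite \<Rightarrow> 'n sfun"
  assumes dA: "\<And>q. A q differentiable (at x)" and dB: "\<And>q r. B q r differentiable (at x)"
    and dC: "\<And>r. C r differentiable (at x)"
  shows "pd (\<lambda>y. \<Sum>q\<in>UNIV. \<Sum>r\<in>UNIV. A q y * B q r y * C r y) k x
    = (\<Sum>q\<in>UNIV. \<Sum>r\<in>UNIV. pd (A q) k x * B q r x * C r x + A q x * pd (B q r) k x * C r x
        + A q x * B q r x * pd (C r) k x)"
proof -
  have d1: "\<And>q r. (\<lambda>y. A q y * B q r y) differentiable (at x)" using dA dB by (rule differentiable_mult)
  have d2: "\<And>q r. (\<lambda>y. A q y * B q r y * C r y) differentiable (at x)" using d1 dC by (rule differentiable_mult)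
  have d3: "\<And>q. (\<lambda>y. \<Sum>r\<in>UNIV. A q y * B q r y * C r y) differentiable (at x)"
    using d2 by (auto intro: differentiable_sum)
  have "pd (\<lambda>y. \<Sum>q\<in>UNIV. \<Sum>r\<in>UNIV. A q y * B q r y * C r y) k x
      = (\<Sum>q\<in>UNIV. pd (\<lambda>y. \<Sum>r\<in>UNIV. A q y * B q r y * C r y) k x)"
    by (rule pd_sum) (simp_all add: d3)
  also have "\<dots> = (\<Sum>q\<in>UNIV. \<Sum>r\<in>UNIV. pd (\<lambda>y. A q y * B q r y * C r y) k x)"
    by (rule sum.cong[OF refl], rule pd_sum) (simp_all add: d2)
  also have "\<dots> = (\<Sum>q\<in>UNIV. \<Sum>r\<in>UNIV. (A q x * B q r x) * pd (C r) k x + (A q x * pd (B q r) k x + pd (A q) k x * B q r x) * C r x)"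
    by (simp only: pd_mult[OF d1 dC] pd_mult[OF dA dB])
  finally show ?thesis by (simp add: ring_distribs mult_ac add_ac)
qed

lemma trip_contr: fixes A :: "'a::finite \<Rightarrow> real" and C :: "'b::finite \<Rightarrow> real"
  shows "(\<Sum>q\<in>UNIV. \<Sum>r\<in>UNIV. A q * B q r * C r) = (\<Sum>r\<in>UNIV. (\<Sum>q\<in>UNIV. A q * B q r) * C r)"
  by (simp add: sum_distrib_right) (rule sum.swap)

lemma contr2': fixes Z :: "'a::finite \<Rightarrow> real" and X :: "'b::finite \<Rightarrow> real"
  shows "(\<Sum>c\<in>UNIV. (\<Sum>q\<in>UNIV. A c q * Z q) * X c) = (\<Sum>q\<in>UNIV. Z q * (\<Sum>c\<in>UNIV. A c q * X c))"
  by (simp add: sum_distrib_left sum_distrib_right mult_ac) (rule sum.swap)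

lemma contr3: fixes A :: "'a::finite \<Rightarrow> real" and X :: "'b::finite \<Rightarrow> 'c::finite \<Rightarrow> real"
  shows "(\<Sum>c\<in>UNIV. \<Sum>b\<in>UNIV. (\<Sum>l\<in>UNIV. A l * F l c b) * X c b) = (\<Sum>l\<in>UNIV. A l * (\<Sum>c\<in>UNIV. \<Sum>b\<in>UNIV. F l c b * X c b))"
proof -
  have "(\<Sum>c\<in>UNIV. \<Sum>b\<in>UNIV. (\<Sum>l\<in>UNIV. A l * F l c b) * X c b) = (\<Sum>c\<in>UNIV. \<Sum>b\<in>UNIV. \<Sum>l\<in>UNIV. A l * (F l c b * X c b))"
    by (simp add: sum_distrib_right mult.assoc)
  also have "\<dots> = (\<Sum>l\<in>UNIV. \<Sum>c\<in>UNIV. \<Sum>b\<in>UNIV. A l * (F l c b * X c b))" by (rule rot3[symmetric])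
  also have "\<dots> = (\<Sum>l\<in>UNIV. A l * (\<Sum>c\<in>UNIV. \<Sum>b\<in>UNIV. F l c b * X c b))" by (simp add: sum_distrib_left)
  finally show ?thesis .
qed

context bc begin

lemma gD2: fixes S T :: "'n \<Rightarrow> 'n \<Rightarrow> 'n sfun" and X :: "'n \<Rightarrow> 'n \<Rightarrow> real"
  assumes x: "x \<in> U" and S: "\<And>a b. smooth_on U (S a b)" and T: "\<And>a b. smooth_on U (T a b)"
    and z: "\<And>y b. y \<in> U \<Longrightarrow> (\<Sum>q\<in>UNIV. \<Sum>r\<in>UNIV. S a q y * ginv g q r y * T r b y) = 0"
    and o: "\<And>r c. (\<Sum>b\<in>UNIV. T r b x * X c b) = 0"
  shows "(\<Sum>c\<in>UNIV. \<Sum>b\<in>UNIV. (\<Sum>l\<in>UNIV. mixd g S a l x * pd (T l b) c x) * X c b) = 0"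
proof -
  define Y where "Y c r = (\<Sum>q\<in>UNIV. pd (S a q) c x * ginv g q r x + S a q x * pd (ginv g q r) c x)" for c r
  have key: "(\<Sum>l\<in>UNIV. mixd g S a l x * pd (T l b) c x) = - (\<Sum>r\<in>UNIV. Y c r * T r b x)" for c b
  proof -
    have "pd (\<lambda>y. \<Sum>q\<in>UNIV. \<Sum>r\<in>UNIV. S a q y * ginv g q r y * T r b y) c x = pd (\<lambda>y. 0) c x"
      by (rule pd_local[OF Uo x]) (simp add: z)
    then have "(\<Sum>q\<in>UNIV. \<Sum>r\<in>UNIV. pd (S a q) c x * ginv g q r x * T r b x + S a q x * pd (ginv g q r) c x * T r b x
        + S a q x * ginv g q r x * pd (T r b) c x) = 0"
      using x by (simp add: pd_trip smooth_diff[OF S] smooth_diff[OF T] dgi pd_const)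
    moreover have "(\<Sum>q\<in>UNIV. \<Sum>r\<in>UNIV. S a q x * ginv g q r x * pd (T r b) c x) = (\<Sum>l\<in>UNIV. mixd g S a l x * pd (T l b) c x)"
      by (simp add: trip_contr mixd_def)
    moreover have "(\<Sum>q\<in>UNIV. \<Sum>r\<in>UNIV. pd (S a q) c x * ginv g q r x * T r b x + S a q x * pd (ginv g q r) c x * T r b x)
       = (\<Sum>r\<in>UNIV. Y c r * T r b x)"
      unfolding Y_def by (simp only: sum.distrib ring_distribs trip_contr)
    ultimately show ?thesis by (simp add: sum.distrib)
  qed
  have "(\<Sum>c\<in>UNIV. \<Sum>b\<in>UNIV. (\<Sum>l\<in>UNIV. mixd g S a l x * pd (T l b) c x) * X c b)
     = - (\<Sum>c\<in>UNIV. \<Sum>b\<in>UNIV. (\<Sum>r\<in>UNIV. Y c r * T r b x) * X c b)"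
    by (simp add: key sum_negf)
  also have "\<dots> = - (\<Sum>c\<in>UNIV. \<Sum>r\<in>UNIV. Y c r * (\<Sum>b\<in>UNIV. T r b x * X c b))"
    by (simp add: contr2)
  also have "\<dots> = 0" by (simp add: o)
  finally show ?thesis .
qed

lemma gD1: fixes T :: "'n \<Rightarrow> 'n \<Rightarrow> 'n sfun" and X :: "'n \<Rightarrow> 'n \<Rightarrow> real"
  assumes x: "x \<in> U" and T: "\<And>a b. smooth_on U (T a b)"
    and z: "\<And>y c b. y \<in> U \<Longrightarrow> (\<Sum>q\<in>UNIV. \<Sum>r\<in>UNIV. T c q y * ginv g q r y * T r b y) = T c b y"
    and o1: "\<And>r c. (\<Sum>b\<in>UNIV. T r b x * X c b) = 0"
    and o2: "\<And>q b. (\<Sum>c\<in>UNIV. T c q x * X c b) = 0"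
  shows "(\<Sum>c\<in>UNIV. \<Sum>b\<in>UNIV. pd (T c b) l x * X c b) = 0"
proof -
  define Y where "Y c r = (\<Sum>q\<in>UNIV. pd (T c q) l x * ginv g q r x + T c q x * pd (ginv g q r) l x)" for c r
  define Z where "Z q b = (\<Sum>r\<in>UNIV. ginv g q r x * pd (T r b) l x)" for q b
  have key: "pd (T c b) l x = (\<Sum>r\<in>UNIV. Y c r * T r b x) + (\<Sum>q\<in>UNIV. T c q x * Z q b)" for c b
  proof -
    have "pd (T c b) l x = pd (\<lambda>y. \<Sum>q\<in>UNIV. \<Sum>r\<in>UNIV. T c q y * ginv g q r y * T r b y) l x"
      by (rule pd_local[OF Uo x]) (simp add: z)
    also have "\<dots> = (\<Sum>q\<in>UNIV. \<Sum>r\<in>UNIV. pd (T c q) l x * ginv g q r x * T r b x + T c q x * pd (ginv g q r) l x * T r b x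
        + T c q x * ginv g q r x * pd (T r b) l x)"
      using x by (simp add: pd_trip smooth_diff[OF T] dgi)
    also have "\<dots> = (\<Sum>r\<in>UNIV. Y c r * T r b x) + (\<Sum>q\<in>UNIV. T c q x * Z q b)"
    proof -
      have "(\<Sum>q\<in>UNIV. \<Sum>r\<in>UNIV. pd (T c q) l x * ginv g q r x * T r b x + T c q x * pd (ginv g q r) l x * T r b x)
         = (\<Sum>r\<in>UNIV. Y c r * T r b x)"
        unfolding Y_def by (simp only: sum.distrib ring_distribs trip_contr)
      moreover have "(\<Sum>q\<in>UNIV. \<Sum>r\<in>UNIV. T c q x * ginv g q r x * pd (T r b) l x) = (\<Sum>q\<in>UNIV. T c q x * Z q b)"
        unfolding Z_def by (simp add: sum_distrib_left mult_ac)
      ultimately show ?thesis by (simp add: sum.distrib)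
    qed
    finally show ?thesis .
  qed
  have "(\<Sum>c\<in>UNIV. \<Sum>b\<in>UNIV. pd (T c b) l x * X c b)
     = (\<Sum>c\<in>UNIV. \<Sum>b\<in>UNIV. (\<Sum>r\<in>UNIV. Y c r * T r b x) * X c b) + (\<Sum>c\<in>UNIV. \<Sum>b\<in>UNIV. (\<Sum>q\<in>UNIV. T c q x * Z q b) * X c b)"
    by (simp add: key ring_distribs sum.distrib)
  also have "(\<Sum>c\<in>UNIV. \<Sum>b\<in>UNIV. (\<Sum>r\<in>UNIV. Y c r * T r b x) * X c b) = 0"
    by (simp add: contr2[symmetric] o1)
  also have "(\<Sum>c\<in>UNIV. \<Sum>b\<in>UNIV. (\<Sum>q\<in>UNIV. T c q x * Z q b) * X c b)
     = (\<Sum>b\<in>UNIV. \<Sum>c\<in>UNIV. (\<Sum>q\<in>UNIV. T c q x * Z q b) * X c b)" by (rule sum.swap)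
  also have "\<dots> = (\<Sum>b\<in>UNIV. \<Sum>q\<in>UNIV. Z q b * (\<Sum>c\<in>UNIV. T c q x * X c b))"
    by (simp add: contr2')
  also have "\<dots> = 0" by (simp add: o2)
  finally show ?thesis by simp
qed

end

context bc begin

lemma up2sym: assumes x: "x \<in> U" and Ssym: "\<And>a b. S a b x = S b a x"
  shows "up2 g S c b x = up2 g S b c x"
  unfolding up2_def by (subst sum.swap) (simp add: Ssym mult_ac)

lemma up2Psym: "x \<in> U \<Longrightarrow> up2 g P c b x = up2 g P b c x"
  by (rule up2sym) (auto intro: Psym)
lemma up2Qsym: "x \<in> U \<Longrightarrow> up2 g PP c b x = up2 g PP b c x"
  by (rule up2sym) (auto intro: Qsym)

lemma pQP: "y \<in> U \<Longrightarrow> (\<Sum>q\<in>UNIV. \<Sum>r\<in>UNIV. PP a q y * ginv g q r y * P r b y) = 0"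
proof -
  assume y: "y \<in> U"
  have "(mat2 PP y ** IM y ** mat2 P y) $ a $ b = 0" using mQP[OF y] by simp
  then show ?thesis by (simp add: mm3 IM_nth)
qed

lemma oQP: "x \<in> U \<Longrightarrow> (\<Sum>b\<in>UNIV. PP r b x * up2 g P c b x) = 0"
  using cQuP by (simp add: up2Psym[of x c])
lemma oQP2: "x \<in> U \<Longrightarrow> (\<Sum>c\<in>UNIV. PP c q x * up2 g P c b x) = 0"
  using cQuP by (simp add: Qsym[of x _ q])
lemma oPQ: "x \<in> U \<Longrightarrow> (\<Sum>b\<in>UNIV. P r b x * up2 g PP c b x) = 0"
  using cPuQ by (simp add: up2Qsym[of x c])
lemma oPQ2: "x \<in> U \<Longrightarrow> (\<Sum>c\<in>UNIV. P c q x * up2 g PP c b x) = 0"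
  using cPuQ by (simp add: Psym[of x _ q])

lemma KmX0:
  fixes S T :: "'n \<Rightarrow> 'n \<Rightarrow> 'n sfun" and X :: "'n \<Rightarrow> 'n \<Rightarrow> real"
  assumes x: "x \<in> U" and S: "\<And>a b. smooth_on U (S a b)" and T: "\<And>a b. smooth_on U (T a b)"
    and z: "\<And>y b. y \<in> U \<Longrightarrow> (\<Sum>q\<in>UNIV. \<Sum>r\<in>UNIV. S a q y * ginv g q r y * T r b y) = 0"
    and zT: "\<And>y c b. y \<in> U \<Longrightarrow> (\<Sum>q\<in>UNIV. \<Sum>r\<in>UNIV. T c q y * ginv g q r y * T r b y) = T c b y"
    and Xs: "\<And>c b. X c b = X b c"
    and o1: "\<And>r c. (\<Sum>b\<in>UNIV. T r b x * X c b) = 0"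
    and o2: "\<And>q b. (\<Sum>c\<in>UNIV. T c q x * X c b) = 0"
  shows "(\<Sum>c\<in>UNIV. \<Sum>b\<in>UNIV. (\<Sum>l\<in>UNIV. mixd g S a l x * Km T l c b x) * X c b) = 0"
proof -
  have A: "(\<Sum>c\<in>UNIV. \<Sum>b\<in>UNIV. (\<Sum>l\<in>UNIV. mixd g S a l x * pd (T l b) c x) * X c b) = 0"
    by (rule gD2[where S=S and T=T and X=X and a=a, OF x S T z o1])
  have B: "(\<Sum>c\<in>UNIV. \<Sum>b\<in>UNIV. (\<Sum>l\<in>UNIV. mixd g S a l x * pd (T l c) b x) * X c b) = 0"
  proof -
    have "(\<Sum>c\<in>UNIV. \<Sum>b\<in>UNIV. (\<Sum>l\<in>UNIV. mixd g S a l x * pd (T l c) b x) * X c b)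
       = (\<Sum>b\<in>UNIV. \<Sum>c\<in>UNIV. (\<Sum>l\<in>UNIV. mixd g S a l x * pd (T l c) b x) * X c b)" by (rule sum.swap)
    also have "\<dots> = (\<Sum>c\<in>UNIV. \<Sum>b\<in>UNIV. (\<Sum>l\<in>UNIV. mixd g S a l x * pd (T l b) c x) * X c b)"
      by (simp add: Xs)
    finally show ?thesis using A by simp
  qed
  have C: "(\<Sum>c\<in>UNIV. \<Sum>b\<in>UNIV. (\<Sum>l\<in>UNIV. mixd g S a l x * pd (T c b) l x) * X c b) = 0"
  proof -
    have "(\<Sum>c\<in>UNIV. \<Sum>b\<in>UNIV. (\<Sum>l\<in>UNIV. mixd g S a l x * pd (T c b) l x) * X c b)
       = (\<Sum>l\<in>UNIV. mixd g S a l x * (\<Sum>c\<in>UNIV. \<Sum>b\<in>UNIV. pd (T c b) l x * X c b))" by (rule contr3)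
    also have "\<dots> = 0" using gD1[where T=T and X=X, OF x T zT o1 o2] by simp
    finally show ?thesis .
  qed
  have "(\<Sum>c\<in>UNIV. \<Sum>b\<in>UNIV. (\<Sum>l\<in>UNIV. mixd g S a l x * Km T l c b x) * X c b)
     = (\<Sum>c\<in>UNIV. \<Sum>b\<in>UNIV. (\<Sum>l\<in>UNIV. mixd g S a l x * pd (T l b) c x) * X c b)
     + (\<Sum>c\<in>UNIV. \<Sum>b\<in>UNIV. (\<Sum>l\<in>UNIV. mixd g S a l x * pd (T l c) b x) * X c b)
     - (\<Sum>c\<in>UNIV. \<Sum>b\<in>UNIV. (\<Sum>l\<in>UNIV. mixd g S a l x * pd (T c b) l x) * X c b)"
    unfolding Km_def by (simp add: ring_distribs sum.distrib sum_subtractf)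
  then show ?thesis using A B C by simp
qed

lemma sumP_Mt: "x \<in> U \<Longrightarrow> (\<Sum>r\<in>UNIV. mixd g P a r x * Mt g P r b c x) = - (\<Sum>l\<in>UNIV. mixd g P a l x * Km PP l b c x)"
  by (simp add: Mt_form right_diff_distrib sum_subtractf contr2 cmPQ cmPP)
lemma sumQ_Mt: "x \<in> U \<Longrightarrow> (\<Sum>r\<in>UNIV. mixd g PP a r x * Mt g P r b c x) = (\<Sum>l\<in>UNIV. mixd g PP a l x * Km P l b c x)"
  by (simp add: Mt_form right_diff_distrib sum_subtractf contr2 cmQQ cmQP)

lemma DI1: assumes x: "x \<in> U" shows "(\<Sum>r\<in>UNIV. mixd g P a r x * Ev g P r x) = 0"
proof -
  have "(\<Sum>r\<in>UNIV. mixd g P a r x * Ev g P r x)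
     = (\<Sum>c\<in>UNIV. \<Sum>b\<in>UNIV. (\<Sum>r\<in>UNIV. mixd g P a r x * Mt g P r c b x) * up2 g P c b x)"
    unfolding Ev_def by (rule contr3[symmetric])
  also have "\<dots> = - (\<Sum>c\<in>UNIV. \<Sum>b\<in>UNIV. (\<Sum>l\<in>UNIV. mixd g P a l x * Km PP l c b x) * up2 g P c b x)"
    using x by (simp add: sumP_Mt sum_negf)
  also have "\<dots> = 0"
    using KmX0[where S=P and T=PP and X="\<lambda>c b. up2 g P c b x" and a=a, OF x Ps Qs pPQ pQQ up2Psym[OF x] oQP[OF x] oQP2[OF x]] by simp
  finally show ?thesis .
qed

lemma DI2: assumes x: "x \<in> U" shows "(\<Sum>r\<in>UNIV. mixd g PP a r x * Wv g P PP r x) = 0"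
proof -
  have "(\<Sum>r\<in>UNIV. mixd g PP a r x * Wv g P PP r x)
     = - (\<Sum>c\<in>UNIV. \<Sum>b\<in>UNIV. (\<Sum>r\<in>UNIV. mixd g PP a r x * Mt g P r c b x) * up2 g PP c b x)"
    unfolding Wv_def by (simp add: contr3[symmetric] sum_negf)
  also have "\<dots> = - (\<Sum>c\<in>UNIV. \<Sum>b\<in>UNIV. (\<Sum>l\<in>UNIV. mixd g PP a l x * Km P l c b x) * up2 g PP c b x)"
    using x by (simp add: sumQ_Mt)
  also have "\<dots> = 0"
    using KmX0[where S=PP and T=P and X="\<lambda>c b. up2 g PP c b x" and a=a, OF x Qs Ps pQP pPP up2Qsym[OF x] oPQ[OF x] oPQ2[OF x]] by simp
  finally show ?thesis .
qed

lemma trP: "x \<in> U \<Longrightarrow> (\<Sum>c\<in>UNIV. mixd g P c c x) = real p"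
proof -
  assume x: "x \<in> U"
  have "(\<Sum>c\<in>UNIV. mixd g P c c x) = trace2 g P x"
    unfolding mixd_def trace2_def by (simp add: ginv_sym[OF met x, of _ c for c] mult.commute)
  then show ?thesis using tr x by simp
qed

lemma trQ: "x \<in> U \<Longrightarrow> (\<Sum>c\<in>UNIV. mixd g PP c c x) = real CARD('n) - real p"
proof -
  assume x: "x \<in> U"
  have "(\<Sum>c\<in>UNIV. mixd g PP c c x) = (\<Sum>c\<in>UNIV. 1 - mixd g P c c x)"
  proof (rule sum.cong[OF refl])
    fix c show "mixd g PP c c x = 1 - mixd g P c c x" using mixsum[OF x, of c c] by simp
  qed
  then show ?thesis using trP[OF x] by (simp add: sum_subtractf)
qed

lemma trPuP: assumes x: "x \<in> U" shows "(\<Sum>c\<in>UNIV. \<Sum>b\<in>UNIV. P c b x * up2 g P c b x) = real p"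
proof -
  have "\<And>c. (\<Sum>b\<in>UNIV. P c b x * up2 g P c b x) = mixd g P c c x"
    using cPuP[OF x] by (simp add: up2Psym[OF x])
  then show ?thesis using trP[OF x] by simp
qed
lemma trQuP: assumes x: "x \<in> U" shows "(\<Sum>c\<in>UNIV. \<Sum>b\<in>UNIV. PP c b x * up2 g P c b x) = 0"
proof -
  have "\<And>c. (\<Sum>b\<in>UNIV. PP c b x * up2 g P c b x) = 0"
    using cQuP[OF x] by (simp add: up2Psym[OF x])
  then show ?thesis by simp
qed
lemma trPuQ: assumes x: "x \<in> U" shows "(\<Sum>c\<in>UNIV. \<Sum>b\<in>UNIV. P c b x * up2 g PP c b x) = 0"
proof -
  have "\<And>c. (\<Sum>b\<in>UNIV. P c b x * up2 g PP c b x) = 0"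
    using cPuQ[OF x] by (simp add: up2Qsym[OF x])
  then show ?thesis by simp
qed
lemma trQuQ: assumes x: "x \<in> U" shows "(\<Sum>c\<in>UNIV. \<Sum>b\<in>UNIV. PP c b x * up2 g PP c b x) = real CARD('n) - real p"
proof -
  have "\<And>c. (\<Sum>b\<in>UNIV. PP c b x * up2 g PP c b x) = mixd g PP c c x"
    using cQuQ[OF x] by (simp add: up2Qsym[OF x])
  then show ?thesis using trQ[OF x] by simp
qed

end

lemma lie1_neg:
  fixes F :: "'n::finite \<Rightarrow> 'n sfun"
  assumes dF: "\<And>a. F a differentiable (at x)"
  shows "lie1 xi (\<lambda>a y. - F a y) a x = - lie1 xi F a x"
  unfolding lie1_def using dF by (simp add: pd_minus sum_negf)

context bc begin

lemma up2_fun: "up2 g S c b = (\<lambda>y. \<Sum>i\<in>UNIV. \<Sum>j\<in>UNIV. ginv g c i y * ginv g b j y * S i j y)"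
  by (simp add: fun_eq_iff up2_def)
lemma dup2P: "x \<in> U \<Longrightarrow> up2 g P c b differentiable (at x)"
  unfolding up2_fun by (auto intro!: differentiable_sum differentiable_mult dgi dP)
lemma dup2Q: "x \<in> U \<Longrightarrow> up2 g PP c b differentiable (at x)"
  unfolding up2_fun by (auto intro!: differentiable_sum differentiable_mult dgi dQ)

lemma dMt: assumes x: "x \<in> U" shows "Mt g P a b c differentiable (at x)"
proof -
  have d: "(\<lambda>y. (\<Sum>l\<in>UNIV. mixd g PP a l y * Km P l b c y) - (\<Sum>l\<in>UNIV. mixd g P a l y * Km PP l b c y)) differentiable (at x)"
    by (auto intro!: differentiable_sum differentiable_mult differentiable_diff dmixP dmixQ dKmP dKmQ x)
  show ?thesis by (rule differentiable_local[OF Uo x _ d]) (simp add: Mt_form)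
qed

lemma Ev_fun: "Ev g P = (\<lambda>a y. \<Sum>c\<in>UNIV. \<Sum>b\<in>UNIV. Mt g P a c b y * up2 g P c b y)"
  by (simp add: fun_eq_iff Ev_def)
lemma E2_def: "Wv g P PP = (\<lambda>a y. - (\<Sum>c\<in>UNIV. \<Sum>b\<in>UNIV. Mt g P a c b y * up2 g PP c b y))"
  by (simp add: fun_eq_iff Wv_def)

lemma dEv: "x \<in> U \<Longrightarrow> Ev g P a differentiable (at x)"
  unfolding Ev_fun by (auto intro!: differentiable_sum differentiable_mult dMt dup2P)
lemma dE2: "x \<in> U \<Longrightarrow> (\<lambda>y. \<Sum>c\<in>UNIV. \<Sum>b\<in>UNIV. Mt g P a c b y * up2 g PP c b y) differentiable (at x)"
  by (auto intro!: differentiable_sum differentiable_mult dMt dup2Q)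
lemma dWv: "x \<in> U \<Longrightarrow> Wv g P PP a differentiable (at x)"
  unfolding E2_def by (auto intro!: differentiable_minus dE2)

lemma sumQ_E: "x \<in> U \<Longrightarrow> (\<Sum>r\<in>UNIV. mixd g PP a r x * Ev g P r x) = Ev g P a x"
proof -
  assume x: "x \<in> U"
  have "(\<Sum>r\<in>UNIV. (mixd g P a r x + mixd g PP a r x) * Ev g P r x) = Ev g P a x"
    using x by (simp add: mixsum ifmul_l)
  then show ?thesis using DI1[OF x] by (simp add: ring_distribs sum.distrib)
qed

lemma sumP_W: "x \<in> U \<Longrightarrow> (\<Sum>r\<in>UNIV. mixd g P a r x * Wv g P PP r x) = Wv g P PP a x"
proof -
  assume x: "x \<in> U"
  have "(\<Sum>r\<in>UNIV. (mixd g P a r x + mixd g PP a r x) * Wv g P PP r x) = Wv g P PP a x"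
    using x by (simp add: mixsum ifmul_l)
  then show ?thesis using DI2[OF x] by (simp add: ring_distribs sum.distrib)
qed

lemma LX: assumes x: "x \<in> U"
  shows "(\<Sum>c\<in>UNIV. \<Sum>b\<in>UNIV. lie3 xi (Mt g P) a c b x * X c b)
    = phi x * (\<Sum>r\<in>UNIV. mixd g PP a r x * (\<Sum>c\<in>UNIV. \<Sum>b\<in>UNIV. Mt g P r c b x * X c b))
    + chi x * (\<Sum>r\<in>UNIV. mixd g P a r x * (\<Sum>c\<in>UNIV. \<Sum>b\<in>UNIV. Mt g P r c b x * X c b))
    - (\<Sum>q\<in>UNIV. PP a q x * grad g phi q x) * (\<Sum>c\<in>UNIV. \<Sum>b\<in>UNIV. P c b x * X c b)
    + (\<Sum>q\<in>UNIV. P a q x * grad g chi q x) * (\<Sum>c\<in>UNIV. \<Sum>b\<in>UNIV. PP c b x * X c b)"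
proof -
  have "(\<Sum>c\<in>UNIV. \<Sum>b\<in>UNIV. lie3 xi (Mt g P) a c b x * X c b)
    = phi x * (\<Sum>c\<in>UNIV. \<Sum>b\<in>UNIV. (\<Sum>r\<in>UNIV. mixd g PP a r x * Mt g P r c b x) * X c b)
    + chi x * (\<Sum>c\<in>UNIV. \<Sum>b\<in>UNIV. (\<Sum>r\<in>UNIV. mixd g P a r x * Mt g P r c b x) * X c b)
    - (\<Sum>q\<in>UNIV. PP a q x * grad g phi q x) * (\<Sum>c\<in>UNIV. \<Sum>b\<in>UNIV. P c b x * X c b)
    + (\<Sum>q\<in>UNIV. P a q x * grad g chi q x) * (\<Sum>c\<in>UNIV. \<Sum>b\<in>UNIV. PP c b x * X c b)"
  proof -
    have pw: "\<And>c b. lie3 xi (Mt g P) a c b x * X c b = phi x * ((\<Sum>r\<in>UNIV. mixd g PP a r x * Mt g P r c b x) * X c b)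
      + chi x * ((\<Sum>r\<in>UNIV. mixd g P a r x * Mt g P r c b x) * X c b)
      - (\<Sum>q\<in>UNIV. PP a q x * grad g phi q x) * (P c b x * X c b)
      + (\<Sum>q\<in>UNIV. P a q x * grad g chi q x) * (PP c b x * X c b)"
      using x by (simp add: LM algebra_simps)
    show ?thesis unfolding pw by (simp add: sum.distrib sum_subtractf sum_distrib_left)
  qed
  then show ?thesis by (simp add: contr3)
qed

lemma LE: assumes x: "x \<in> U"
  shows "lie1 xi (Ev g P) a x = - real p * (\<Sum>q\<in>UNIV. PP a q x * grad g phi q x)"
proof -
  have "lie1 xi (Ev g P) a x = (\<Sum>c\<in>UNIV. \<Sum>b\<in>UNIV. lie3 xi (Mt g P) a c b x * up2 g P c b x)
      + (\<Sum>c\<in>UNIV. \<Sum>b\<in>UNIV. Mt g P a c b x * lie20 xi (up2 g P) c b x)"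
    unfolding Ev_fun by (rule leib_c) (auto intro: dMt dup2P x)
  also have "(\<Sum>c\<in>UNIV. \<Sum>b\<in>UNIV. Mt g P a c b x * lie20 xi (up2 g P) c b x) = - phi x * Ev g P a x"
    using x by (simp add: lie20_up2P Ev_def sum_distrib_left mult_ac)
  also have "(\<Sum>c\<in>UNIV. \<Sum>b\<in>UNIV. lie3 xi (Mt g P) a c b x * up2 g P c b x)
     = phi x * Ev g P a x - real p * (\<Sum>q\<in>UNIV. PP a q x * grad g phi q x)"
    using x by (simp add: LX Ev_def[symmetric] sumQ_E DI1 trPuP trQuP)
  finally show ?thesis by simp
qed

lemma LW: assumes x: "x \<in> U"
  shows "lie1 xi (Wv g P PP) a x = (real p - real CARD('n)) * (\<Sum>q\<in>UNIV. P a q x * grad g chi q x)"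
proof -
  let ?E = "\<lambda>a y. \<Sum>c\<in>UNIV. \<Sum>b\<in>UNIV. Mt g P a c b y * up2 g PP c b y"
  have Ee: "\<And>r. ?E r x = - Wv g P PP r x" by (simp add: Wv_def)
  have "lie1 xi (Wv g P PP) a x = - lie1 xi ?E a x"
    unfolding E2_def by (rule lie1_neg) (rule dE2[OF x])
  also have "lie1 xi ?E a x = (\<Sum>c\<in>UNIV. \<Sum>b\<in>UNIV. lie3 xi (Mt g P) a c b x * up2 g PP c b x)
      + (\<Sum>c\<in>UNIV. \<Sum>b\<in>UNIV. Mt g P a c b x * lie20 xi (up2 g PP) c b x)"
    by (rule leib_c) (auto intro: dMt dup2Q x)
  also have "(\<Sum>c\<in>UNIV. \<Sum>b\<in>UNIV. Mt g P a c b x * lie20 xi (up2 g PP) c b x) = chi x * Wv g P PP a x"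
    using x by (simp add: lie20_up2Q Wv_def sum_distrib_left sum_negf mult_ac)
  also have "(\<Sum>c\<in>UNIV. \<Sum>b\<in>UNIV. lie3 xi (Mt g P) a c b x * up2 g PP c b x)
     = - chi x * Wv g P PP a x + (real CARD('n) - real p) * (\<Sum>q\<in>UNIV. P a q x * grad g chi q x)"
    using x by (simp add: LX Ee sumP_W DI2 trPuQ trQuQ sum_negf)
  finally show ?thesis by (simp add: algebra_simps)
qed

end

context bc begin

lemma kne: "real CARD('n) - real p \<noteq> 0"
proof -
  have "CARD('n) \<ge> 1" using p1 p2 by linarith
  then have "p < CARD('n)" using p2 by linarith
  then show ?thesis by simp
qed
lemma pne: "real p \<noteq> 0" using p1 by simp

lemma Tt_fun: "Tt g P PP p = (\<lambda>a b c y. Mt g P a b c y + (1 / (real CARD('n) - real p)) * (Wv g P PP a y * PP b c y)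
    - (1 / real p) * (Ev g P a y * P b c y))"
  by (simp add: fun_eq_iff Tt_def)

lemma dTt: assumes x: "x \<in> U" shows "Tt g P PP p a b c differentiable (at x)"
  unfolding Tt_fun
  by (intro differentiable_add differentiable_diff differentiable_mult differentiable_const dMt[OF x] dWv[OF x] dEv[OF x] dP[OF x] dQ[OF x])

lemma LT0: assumes x: "x \<in> U"
  shows "lie3 xi (Tt g P PP p) a b c x = phi x * (\<Sum>r\<in>UNIV. mixd g PP a r x * Mt g P r b c x)
     + chi x * (\<Sum>r\<in>UNIV. mixd g P a r x * Mt g P r b c x)
     + chi x * Wv g P PP a x * PP b c x / (real CARD('n) - real p) - phi x * Ev g P a x * P b c x / real p"
proof -
  have "lie3 xi (Tt g P PP p) a b c x = lie3 xi (Mt g P) a b c x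
     + (1 / (real CARD('n) - real p)) * lie3 xi (\<lambda>a b c y. Wv g P PP a y * PP b c y) a b c x
     - (1 / real p) * lie3 xi (\<lambda>a b c y. Ev g P a y * P b c y) a b c x"
    unfolding Tt_fun
    by (rule lie3_lin) (auto intro!: differentiable_mult dMt dWv dEv dP dQ x)
  also have "lie3 xi (\<lambda>a b c y. Wv g P PP a y * PP b c y) a b c x
      = (real p - real CARD('n)) * (\<Sum>q\<in>UNIV. P a q x * grad g chi q x) * PP b c x + Wv g P PP a x * (chi x * PP b c x)"
    by (subst leib_f) (auto intro: dWv dQ x simp: LW x lieQ)
  also have "lie3 xi (\<lambda>a b c y. Ev g P a y * P b c y) a b c x
      = - real p * (\<Sum>q\<in>UNIV. PP a q x * grad g phi q x) * P b c x + Ev g P a x * (phi x * P b c x)"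
    by (subst leib_f) (auto intro: dEv dP x simp: LE x lieP)
  finally show ?thesis using kne pne x
    by (simp add: LM field_simps)
qed

lemma LT: assumes x: "x \<in> U"
  shows "lie3 xi (Tt g P PP p) a b c x =
     (\<Sum>r\<in>UNIV. (phi x * PP a r x + chi x * P a r x) * (\<Sum>s\<in>UNIV. ginv g r s x * Tt g P PP p s b c x))"
proof -
  have R: "(\<Sum>r\<in>UNIV. (phi x * PP a r x + chi x * P a r x) * (\<Sum>s\<in>UNIV. ginv g r s x * Tt g P PP p s b c x))
     = phi x * (\<Sum>s\<in>UNIV. mixd g PP a s x * Tt g P PP p s b c x) + chi x * (\<Sum>s\<in>UNIV. mixd g P a s x * Tt g P PP p s b c x)"
  proof -
    have e1: "(\<Sum>r\<in>UNIV. PP a r x * (\<Sum>s\<in>UNIV. ginv g r s x * Tt g P PP p s b c x)) = (\<Sum>s\<in>UNIV. mixd g PP a s x * Tt g P PP p s b c x)"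
      by (simp add: contr2 mixd_def)
    have e2: "(\<Sum>r\<in>UNIV. P a r x * (\<Sum>s\<in>UNIV. ginv g r s x * Tt g P PP p s b c x)) = (\<Sum>s\<in>UNIV. mixd g P a s x * Tt g P PP p s b c x)"
      by (simp add: contr2 mixd_def)
    show ?thesis unfolding e1[symmetric] e2[symmetric] by (simp add: ring_distribs sum.distrib sum_distrib_left mult_ac)
  qed
  have TQ: "(\<Sum>s\<in>UNIV. mixd g PP a s x * Tt g P PP p s b c x) = (\<Sum>s\<in>UNIV. mixd g PP a s x * Mt g P s b c x)
      - Ev g P a x * P b c x / real p"
  proof -
    have "(\<Sum>s\<in>UNIV. mixd g PP a s x * Tt g P PP p s b c x) = (\<Sum>s\<in>UNIV. mixd g PP a s x * Mt g P s b c x)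
      + (\<Sum>s\<in>UNIV. mixd g PP a s x * Wv g P PP s x) * PP b c x / (real CARD('n) - real p)
      - (\<Sum>s\<in>UNIV. mixd g PP a s x * Ev g P s x) * P b c x / real p"
    proof -
      have pw: "\<And>s. mixd g PP a s x * Tt g P PP p s b c x = mixd g PP a s x * Mt g P s b c x
         + (mixd g PP a s x * Wv g P PP s x) * (PP b c x / (real CARD('n) - real p))
         - (mixd g PP a s x * Ev g P s x) * (P b c x / real p)"
        by (simp add: Tt_def algebra_simps)
      show ?thesis unfolding pw by (simp add: sum.distrib sum_subtractf sum_distrib_right sum_divide_distrib)
    qed
    then show ?thesis using x by (simp add: DI2 sumQ_E)
  qed
  have TP: "(\<Sum>s\<in>UNIV. mixd g P a s x * Tt g P PP p s b c x) = (\<Sum>s\<in>UNIV. mixd g P a s x * Mt g P s b c x)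
      + Wv g P PP a x * PP b c x / (real CARD('n) - real p)"
  proof -
    have "(\<Sum>s\<in>UNIV. mixd g P a s x * Tt g P PP p s b c x) = (\<Sum>s\<in>UNIV. mixd g P a s x * Mt g P s b c x)
      + (\<Sum>s\<in>UNIV. mixd g P a s x * Wv g P PP s x) * PP b c x / (real CARD('n) - real p)
      - (\<Sum>s\<in>UNIV. mixd g P a s x * Ev g P s x) * P b c x / real p"
    proof -
      have pw: "\<And>s. mixd g P a s x * Tt g P PP p s b c x = mixd g P a s x * Mt g P s b c x
         + (mixd g P a s x * Wv g P PP s x) * (PP b c x / (real CARD('n) - real p))
         - (mixd g P a s x * Ev g P s x) * (P b c x / real p)"
        by (simp add: Tt_def algebra_simps)
      show ?thesis unfolding pw by (simp add: sum.distrib sum_subtractf sum_distrib_right sum_divide_distrib)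
    qed
    then show ?thesis using x by (simp add: DI1 sumP_W)
  qed
  show ?thesis unfolding R TQ TP LT0[OF x] by (simp add: algebra_simps)
qed

lemma mixup_eq: assumes y: "y \<in> U"
  shows "mixup g S T a b c y = (\<Sum>d\<in>UNIV. up2 g S a d y * T d b c y)"
proof -
  have "(\<Sum>d\<in>UNIV. up2 g S a d y * T d b c y)
      = (\<Sum>d\<in>UNIV. \<Sum>i\<in>UNIV. \<Sum>j\<in>UNIV. ginv g a i y * ginv g d j y * S i j y * T d b c y)"
    by (simp add: up2_def sum_distrib_right)
  also have "\<dots> = (\<Sum>i\<in>UNIV. \<Sum>j\<in>UNIV. \<Sum>d\<in>UNIV. ginv g a i y * ginv g d j y * S i j y * T d b c y)"
    by (rule rot3)
  also have "\<dots> = mixup g S T a b c y"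
    unfolding mixup_def by (simp add: ginv_sym[OF met y] mult_ac)
  finally show ?thesis by simp
qed

lemma cv7: "x \<in> U \<Longrightarrow> (\<Sum>d\<in>UNIV. up2 g S a d x * T d r x) = (IM x ** mat2 S x ** IM x ** mat2 T x) $ a $ r"
  by (simp add: up2_mat mm2)

lemma LA: assumes x: "x \<in> U"
  shows "lie12 xi (mixup g P (Tt g P PP p)) a b c x = (chi x - phi x) * mixup g P (Tt g P PP p) a b c x"
proof -
  let ?T = "Tt g P PP p"
  have "lie12 xi (mixup g P ?T) a b c x = lie12 xi (\<lambda>a b c y. \<Sum>d\<in>UNIV. up2 g P a d y * ?T d b c y) a b c x"
    by (rule lie12_cong[OF Uo x]) (simp add: mixup_eq)
  also have "\<dots> = (\<Sum>d\<in>UNIV. lie20 xi (up2 g P) a d x * ?T d b c x) + (\<Sum>d\<in>UNIV. up2 g P a d x * lie3 xi ?T d b c x)"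
    by (rule leib_e) (auto intro: dup2P dTt x)
  also have "(\<Sum>d\<in>UNIV. up2 g P a d x * lie3 xi ?T d b c x)
     = (\<Sum>r\<in>UNIV. (\<Sum>d\<in>UNIV. up2 g P a d x * (phi x * PP d r x + chi x * P d r x)) * (\<Sum>s\<in>UNIV. ginv g r s x * ?T s b c x))"
    using x by (simp add: LT contr2)
  also have "\<dots> = chi x * (\<Sum>r\<in>UNIV. (IM x ** mat2 P x) $ a $ r * (\<Sum>s\<in>UNIV. IM x $ r $ s * ?T s b c x))"
  proof -
    have c1: "\<And>r. (\<Sum>d\<in>UNIV. up2 g P a d x * (phi x * PP d r x + chi x * P d r x)) = chi x * (IM x ** mat2 P x) $ a $ r"
    proof -
      fix r
      have "(\<Sum>d\<in>UNIV. up2 g P a d x * (phi x * PP d r x + chi x * P d r x))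
         = phi x * (\<Sum>d\<in>UNIV. up2 g P a d x * PP d r x) + chi x * (\<Sum>d\<in>UNIV. up2 g P a d x * P d r x)"
        by (simp add: ring_distribs sum.distrib sum_distrib_left mult_ac)
      also have "\<dots> = chi x * (IM x ** mat2 P x) $ a $ r" using x by (simp add: cv7 massoc mrs)
      finally show "(\<Sum>d\<in>UNIV. up2 g P a d x * (phi x * PP d r x + chi x * P d r x)) = chi x * (IM x ** mat2 P x) $ a $ r" .
    qed
    show ?thesis by (simp add: c1 IM_nth sum_distrib_left mult_ac)
  qed
  also have "\<dots> = chi x * (\<Sum>s\<in>UNIV. up2 g P a s x * ?T s b c x)"
    using x by (simp add: contr2 mm2[symmetric] cv6)
  finally show ?thesis using x by (simp add: lie20_up2P mixup_eq algebra_simps sum_distrib_left sum_subtractf sum_negf)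
qed

lemma LB: assumes x: "x \<in> U"
  shows "lie12 xi (mixup g PP (Tt g P PP p)) a b c x = (phi x - chi x) * mixup g PP (Tt g P PP p) a b c x"
proof -
  let ?T = "Tt g P PP p"
  have "lie12 xi (mixup g PP ?T) a b c x = lie12 xi (\<lambda>a b c y. \<Sum>d\<in>UNIV. up2 g PP a d y * ?T d b c y) a b c x"
    by (rule lie12_cong[OF Uo x]) (simp add: mixup_eq)
  also have "\<dots> = (\<Sum>d\<in>UNIV. lie20 xi (up2 g PP) a d x * ?T d b c x) + (\<Sum>d\<in>UNIV. up2 g PP a d x * lie3 xi ?T d b c x)"
    by (rule leib_e) (auto intro: dup2Q dTt x)
  also have "(\<Sum>d\<in>UNIV. up2 g PP a d x * lie3 xi ?T d b c x)
     = (\<Sum>r\<in>UNIV. (\<Sum>d\<in>UNIV. up2 g PP a d x * (phi x * PP d r x + chi x * P d r x)) * (\<Sum>s\<in>UNIV. ginv g r s x * ?T s b c x))"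
    using x by (simp add: LT contr2)
  also have "\<dots> = phi x * (\<Sum>r\<in>UNIV. (IM x ** mat2 PP x) $ a $ r * (\<Sum>s\<in>UNIV. IM x $ r $ s * ?T s b c x))"
  proof -
    have c1: "\<And>r. (\<Sum>d\<in>UNIV. up2 g PP a d x * (phi x * PP d r x + chi x * P d r x)) = phi x * (IM x ** mat2 PP x) $ a $ r"
    proof -
      fix r
      have "(\<Sum>d\<in>UNIV. up2 g PP a d x * (phi x * PP d r x + chi x * P d r x))
         = phi x * (\<Sum>d\<in>UNIV. up2 g PP a d x * PP d r x) + chi x * (\<Sum>d\<in>UNIV. up2 g PP a d x * P d r x)"
        by (simp add: ring_distribs sum.distrib sum_distrib_left mult_ac)
      also have "\<dots> = phi x * (IM x ** mat2 PP x) $ a $ r" using x by (simp add: cv7 massoc mrs)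
      finally show "(\<Sum>d\<in>UNIV. up2 g PP a d x * (phi x * PP d r x + chi x * P d r x)) = phi x * (IM x ** mat2 PP x) $ a $ r" .
    qed
    show ?thesis by (simp add: c1 IM_nth sum_distrib_left mult_ac)
  qed
  also have "\<dots> = phi x * (\<Sum>s\<in>UNIV. up2 g PP a s x * ?T s b c x)"
    using x by (simp add: contr2 mm2[symmetric] cv6)
  finally show ?thesis using x by (simp add: lie20_up2Q mixup_eq algebra_simps sum_distrib_left sum_subtractf sum_negf)
qed

end

theorem mainTheorem3:
  fixes U :: "(real^'n::finite) set"
    and g P PP :: "'n \<Rightarrow> 'n \<Rightarrow> real^'n \<Rightarrow> real"
    and xi :: "'n \<Rightarrow> real^'n \<Rightarrow> real"
    and phi chi :: "real^'n \<Rightarrow> real"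
    and p :: nat
  assumes "metric_on U g"
    and "proj_pair U g P PP"
    and "\<forall>x\<in>U. trace2 g P x = real p"
    and "1 \<le> p" and "p \<le> CARD('n) - 1"
    and "biconformal U P PP xi phi chi"
  shows "\<forall>x\<in>U.
     (\<forall>a. lie1 xi (Ev g P) a x = - real p * (\<Sum>q\<in>UNIV. PP a q x * grad g phi q x)) \<and>
     (\<forall>a. lie1 xi (Wv g P PP) a x = (real p - real CARD('n)) * (\<Sum>q\<in>UNIV. P a q x * grad g chi q x)) \<and>
     (\<forall>a b c. lie3 xi (Tt g P PP p) a b c x =
        (\<Sum>r\<in>UNIV. (phi x * PP a r x + chi x * P a r x) * (\<Sum>s\<in>UNIV. ginv g r s x * Tt g P PP p s b c x))) \<and>
     (\<forall>a b c. lie12 xi (mixup g P (Tt g P PP p)) a b c x = (chi x - phi x) * mixup g P (Tt g P PP p) a b c x) \<and>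
     (\<forall>a b c. lie12 xi (mixup g PP (Tt g P PP p)) a b c x = (phi x - chi x) * mixup g PP (Tt g P PP p) a b c x)"
proof -
  interpret B: bc U g P PP xi phi chi p using assms by (simp add: bc_def)
  show ?thesis using B.LE B.LW B.LT B.LA B.LB by blast
qed

end
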